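(* For any register $\bar q$, projectors $P,Q$ on $\mathcal{H}_{\bar q}$ and program $S$: if $\vdash_{\textsc{Wpc}}[P,Q]_{\bar q}\sqsubseteq S$ or $\vdash_{\textsc{Spc}}[P,Q]_{\bar q}\sqsubseteq S$, then $\models\{P\}S\{Q\}$.
   Context: Setting. $V$ finite set of qubit variables, $\mathcal{H}_W=\bigotimes_{q\in W}\mathcal{H}_q$, $\mathcal{H}_q\cong\mathbb{C}^2$ with basis $\{|0\rangle,|1\rangle\}$; operators on subsystems identified with their extension by identity. Projectors identified with subspaces; $\sqsubseteq$ inclusion; $\wedge,\vee$ meet and join; $P^\perp$ orthocomplement; $I$, $0$ top and bottom. Sasaki implication $P\rightsquigarrow Q=P^\perp\vee(P\wedge Q)$, Sasaki conjunction $P\Cap Q=P\wedge(P^\perp\vee Q)$. $\lceil A\rceil$ support of positive $A$; $E(M)$ eigenspace of $M$ for eigenvalue $1$ ($0$ if none); $\mathrm{tr}_{\bar q}$ partial trace. $\rho\models P$ iff $\lceil\rho\rceil\subseteq P$. Programs $S::=\mathbf{skip}\mid\mathbf{abort}\mid \bar q:=0\mid \bar q \mathrel{*}= U\mid \mathbf{assert}\ P[\bar q]\mid [P,Q]_{\bar q}\mid S_0\oplus_p S_1\mid S_0;S_1\mid \mathbf{if}\ P[\bar q]\ \mathbf{then}\ S_1\ \mathbf{else}\ S_0\ \mathbf{end}\mid \mathbf{while}\ P[\bar q]\ \mathbf{do}\ S\ \mathbf{end}$ with denotations (sets of super-operators): $\{\mathrm{id}\}$, $\{0\}$, $\{\rho\mapsto\sum_i|0\rangle_{\bar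 q}\langle i|\rho|i\rangle_{\bar q}\langle 0|\}$, $\{\rho\mapsto U\rho U^\dagger\}$, $\{\rho\mapsto P\rho P\}$, $\{\mathcal{E}$ completely positive trace-nonincreasing on $\mathcal{H}_{\bar q}:\forall\rho\models P,\mathcal{E}(\rho)\models Q\}$, $\{p\mathcal{E}_0+(1-p)\mathcal{E}_1\}$, $\{\mathcal{E}_1\circ\mathcal{E}_0\}$, $\{\mathcal{E}_1\circ\mathcal{P}+\mathcal{E}_0\circ\mathcal{P}^\perp\}$, $\{\sum_{k\ge0}\mathcal{P}^\perp\circ\mathcal{E}_k\circ\mathcal{P}\circ\cdots\circ\mathcal{E}_1\circ\mathcal{P}\}$ respectively, where $\mathcal{E}_i\in\llbracket S_i\rrbracket$ (resp. $\llbracket S\rrbracket$) are chosen independently, $\mathcal{P}(\rho)=P\rho P$, $\mathcal{P}^\perp(\rho)=P^\perp\rho P^\perp$. $\models\{P\}S\{Q\}$ iff for all partial density operators $\rho$ on $\mathcal{H}_V$ and $\mathcal{E}\in\llbracket S\rrbracket$, $\rho\models P\Rightarrow\mathcal{E}(\rho)\models Q$. $S\sqsubseteq S'$ (refinement) iff for all projectors $P,Q$, $\models\{P\}S\{Q\}\Rightarrow\models\{P\}S'\{Q\}$; $S\equiv S'$ iff both directions. Rules (all schematic in programs, registers, projectors on the relevant register, $p$): Structural: $S\equiv S$; from $S_0\sqsubseteq S_1$ and $S_1\sqsubseteq S_2$ infer $S_0\sqsubseteq S_2$; from $S_0\sqsubseteq T_0$, $S_1\sqsubseteq T_1$ infer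 $S_0;S_1\sqsubseteq T_0;T_1$, $S_0\oplus_pS_1\sqsubseteq T_0\oplus_pT_1$, and $\mathbf{if}\ P[\bar q]\ \mathbf{then}\ S_1\ \mathbf{else}\ S_0\ \mathbf{end}\sqsubseteq\mathbf{if}\ P[\bar q]\ \mathbf{then}\ T_1\ \mathbf{else}\ T_0\ \mathbf{end}$; from $S\sqsubseteq T$ infer $\mathbf{while}\ P[\bar q]\ \mathbf{do}\ S\ \mathbf{end}\sqsubseteq\mathbf{while}\ P[\bar q]\ \mathbf{do}\ T\ \mathbf{end}$. Common: $[0,Q]_{\bar q}\sqsubseteq S$; $[P,I]_{\bar q}\sqsubseteq S$; $[P,Q]_{\bar q}\sqsubseteq\mathbf{abort}$; $[P,P]_{\bar q}\sqsubseteq\mathbf{skip}$; $[P,Q]_{\bar q}\sqsubseteq[R,T]_{\bar q}$ if $P\sqsubseteq R$ and $T\sqsubseteq Q$; $[P,Q]_{\bar q}\sqsubseteq[P,R]_{\bar q};[R,Q]_{\bar q}$. Wpc rules: $[E(\langle0|_{\bar q}Q|0\rangle_{\bar q}),Q]_{\bar q}\sqsubseteq\bar q:=0$; $[U^\dagger_{\bar q}QU_{\bar q},Q]_{\bar q}\sqsubseteq\bar q\mathrel{*}=U$; $[P\rightsquigarrow Q,Q]_{\bar q}\sqsubseteq\mathbf{assert}\ P[\bar q]$; $[P,Q]_{\bar q}\equiv[P_1,Q]_{\bar q}\oplus_p[P_2,Q]_{\bar q}$ if $0<p<1$ and $P=P_1\wedge P_2$; $[(P\rightsquigarrow P_1)\wedge(P^\perp\rightsquigarrow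 P_0),Q]_{\bar q}\equiv\mathbf{if}\ P[\bar q]\ \mathbf{then}\ [P_1,Q]_{\bar q}\ \mathbf{else}\ [P_0,Q]_{\bar q}\ \mathbf{end}$; $[(P\rightsquigarrow Q)\wedge(P^\perp\rightsquigarrow R),R]_{\bar q}\sqsubseteq\mathbf{while}\ P[\bar q]\ \mathbf{do}\ [Q,(P\rightsquigarrow Q)\wedge(P^\perp\rightsquigarrow R)]_{\bar q}\ \mathbf{end}$. Spc rules: $[P,|0\rangle_{\bar q}\langle0|\otimes\lceil\mathrm{tr}_{\bar q}(P)\rceil]_{\bar q}\sqsubseteq\bar q:=0$; $[P,U_{\bar q}PU^\dagger_{\bar q}]_{\bar q}\sqsubseteq\bar q\mathrel{*}=U$; $[P,Q\Cap P]_{\bar q}\sqsubseteq\mathbf{assert}\ Q[\bar q]$; $[P,Q]_{\bar q}\equiv[P,Q_1]_{\bar q}\oplus_p[P,Q_2]_{\bar q}$ if $0<p<1$ and $Q_1\vee Q_2=Q$; $[P,Q]_{\bar q}\sqsubseteq\mathbf{if}\ R[\bar q]\ \mathbf{then}\ [R\Cap P,Q]_{\bar q}\ \mathbf{else}\ [R^\perp\Cap P,Q]_{\bar q}\ \mathbf{end}$; $[Inv,P^\perp\Cap Inv]_{\bar q}\sqsubseteq\mathbf{while}\ P[\bar q]\ \mathbf{do}\ [P\Cap Inv,Inv]_{\bar q}\ \mathbf{end}$. $\vdash_{\textsc{Wpc}}[P,Q]_{\bar q}\sqsubseteq S$ means this relation is derivable from the structural, common and Wpc rules; $\vdash_{\textsc{Spc}}$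 likewise with the Spc rules instead of the Wpc rules (an equivalence $\equiv$ may be used in either direction as $\sqsubseteq$). *)

theory Defs
  imports Complex_Main
begin

section \<open>Hilbert spaces of qubit registers\<close>

text \<open>The finite set V of qubit variables is the universe of a finite type 'v.
A computational basis vector of H_V is an assignment s :: 'v => bool.
For a register W (a set of variables), H_W is realised inside H_V as the span of the
"padded" basis vectors s with s x = False for x outside W (i.e. H_W tensor |0...0>),
so an operator on H_W is a matrix on assignments vanishing outside padded assignments.
Operators on subsystems are identified with their extension by identity via ext.\<close>

type_synonym 'v st = "'v \<Rightarrow> bool"
type_synonym 'v mat = "'v st \<Rightarrow> 'v st \<Rightarrow> complex"
type_synonym 'v vec = "'v st \<Rightarrow> complex"
type_synonym 'v sop = "'v mat \<Rightarrow> 'v mat"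

definition supp_in :: "'v set \<Rightarrow> 'v st \<Rightarrow> bool" where
  "supp_in W s \<longleftrightarrow> (\<forall>x. x \<notin> W \<longrightarrow> \<not> s x)"

definition restr :: "'v set \<Rightarrow> 'v st \<Rightarrow> 'v st" where
  "restr W s = (\<lambda>x. x \<in> W \<and> s x)"

definition merge :: "'v set \<Rightarrow> 'v st \<Rightarrow> 'v st \<Rightarrow> 'v st" where
  "merge R u s = (\<lambda>x. if x \<in> R then u x else s x)"

definition on_reg :: "'v set \<Rightarrow> 'v mat \<Rightarrow> bool" where
  "on_reg W A \<longleftrightarrow> (\<forall>s t. A s t \<noteq> 0 \<longrightarrow> supp_in W s \<and> supp_in W t)"

definition mzero :: "'v mat" where "mzero = (\<lambda>s t. 0)"

definition madd :: "'v mat \<Rightarrow> 'v mat \<Rightarrow> 'v mat" where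
  "madd A B = (\<lambda>s t. A s t + B s t)"

definition msub :: "'v mat \<Rightarrow> 'v mat \<Rightarrow> 'v mat" where
  "msub A B = (\<lambda>s t. A s t - B s t)"

definition mmult :: "'v::finite mat \<Rightarrow> 'v mat \<Rightarrow> 'v mat" (infixl "**" 70) where
  "A ** B = (\<lambda>s t. \<Sum>u\<in>UNIV. A s u * B u t)"

definition madj :: "'v mat \<Rightarrow> 'v mat" where
  "madj A = (\<lambda>s t. cnj (A t s))"

definition mv :: "'v::finite mat \<Rightarrow> 'v vec \<Rightarrow> 'v vec" where
  "mv A x = (\<lambda>s. \<Sum>t\<in>UNIV. A s t * x t)"

definition mtrace :: "'v::finite mat \<Rightarrow> complex" where
  "mtrace A = (\<Sum>s\<in>UNIV. A s s)"

definition idW :: "'v set \<Rightarrow> 'v mat" where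
  "idW W = (\<lambda>s t. if s = t \<and> supp_in W s then 1 else 0)"

definition ketbra :: "'v st \<Rightarrow> 'v st \<Rightarrow> 'v mat" where
  "ketbra u v = (\<lambda>s t. if s = u \<and> t = v then 1 else 0)"

definition zero_st :: "'v st" where "zero_st = (\<lambda>x. False)"

text \<open>extension of an operator B on H_W' to H_W (W' a subregister of W) by the identity
on H_{W - W'}\<close>
definition ext_within :: "'v set \<Rightarrow> 'v set \<Rightarrow> 'v mat \<Rightarrow> 'v mat" where
  "ext_within W W' B = (\<lambda>s t. if supp_in W s \<and> supp_in W t \<and> (\<forall>x. x \<notin> W' \<longrightarrow> s x = t x)
                               then B (restr W' s) (restr W' t) else 0)"

definition ext :: "'v set \<Rightarrow> 'v mat \<Rightarrow> 'v mat" where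
  "ext W B = ext_within UNIV W B"

definition ran :: "'v::finite mat \<Rightarrow> 'v vec set" where
  "ran A = range (mv A)"

definition qf :: "'v::finite mat \<Rightarrow> 'v vec \<Rightarrow> complex" where
  "qf A x = (\<Sum>s\<in>UNIV. \<Sum>t\<in>UNIV. cnj (x s) * A s t * x t)"

definition psd :: "'v::finite mat \<Rightarrow> bool" where
  "psd A \<longleftrightarrow> (\<forall>x. Im (qf A x) = 0 \<and> 0 \<le> Re (qf A x))"

definition pdo :: "'v set \<Rightarrow> 'v::finite mat \<Rightarrow> bool" where
  "pdo W \<rho> \<longleftrightarrow> on_reg W \<rho> \<and> psd \<rho> \<and> Re (mtrace \<rho>) \<le> 1"

definition is_proj :: "'v set \<Rightarrow> 'v::finite mat \<Rightarrow> bool" where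
  "is_proj W P \<longleftrightarrow> on_reg W P \<and> P ** P = P \<and> madj P = P"

definition is_unitary :: "'v set \<Rightarrow> 'v::finite mat \<Rightarrow> bool" where
  "is_unitary W U \<longleftrightarrow> on_reg W U \<and> madj U ** U = idW W \<and> U ** madj U = idW W"

section \<open>Projector lattice (projectors identified with subspaces)\<close>

definition proj_onto :: "'v set \<Rightarrow> 'v::finite vec set \<Rightarrow> 'v mat" where
  "proj_onto W S = (THE P. is_proj W P \<and> ran P = S)"

definition supp :: "'v set \<Rightarrow> 'v::finite mat \<Rightarrow> 'v mat" where
  "supp W A = proj_onto W (ran A)"

definition ple :: "'v::finite mat \<Rightarrow> 'v mat \<Rightarrow> bool" where
  "ple P Q \<longleftrightarrow> ran P \<subseteq> ran Q"

definition pmeet :: "'v set \<Rightarrow> 'v::finite mat \<Rightarrow> 'v mat \<Rightarrow> 'v mat" where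
  "pmeet W P Q = proj_onto W (ran P \<inter> ran Q)"

text \<open>in finite dimension the join of two subspaces is their (closed) sum\<close>
definition pjoin :: "'v set \<Rightarrow> 'v::finite mat \<Rightarrow> 'v mat \<Rightarrow> 'v mat" where
  "pjoin W P Q = proj_onto W {(\<lambda>s. x s + y s) | x y. x \<in> ran P \<and> y \<in> ran Q}"

definition pcomp :: "'v set \<Rightarrow> 'v::finite mat \<Rightarrow> 'v mat" where
  "pcomp W P = msub (idW W) P"

definition sasaki_imp :: "'v set \<Rightarrow> 'v::finite mat \<Rightarrow> 'v mat \<Rightarrow> 'v mat" where
  "sasaki_imp W P Q = pjoin W (pcomp W P) (pmeet W P Q)"

definition sasaki_conj :: "'v set \<Rightarrow> 'v::finite mat \<Rightarrow> 'v mat \<Rightarrow> 'v mat" where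
  "sasaki_conj W P Q = pmeet W P (pjoin W (pcomp W P) Q)"

definition eig1 :: "'v set \<Rightarrow> 'v::finite mat \<Rightarrow> 'v mat" where
  "eig1 W M = proj_onto W {x. x \<in> ran (idW W) \<and> mv M x = x}"

text \<open><0|_R A |0>_R, an operator on the remaining variables\<close>
definition bra0 :: "'v set \<Rightarrow> 'v mat \<Rightarrow> 'v mat" where
  "bra0 R A = (\<lambda>s t. if (\<forall>x\<in>R. \<not> s x \<and> \<not> t x) then A s t else 0)"

definition ptr :: "'v set \<Rightarrow> 'v::finite mat \<Rightarrow> 'v mat" where
  "ptr R A = (\<lambda>s t. if (\<forall>x\<in>R. \<not> s x \<and> \<not> t x)
      then (\<Sum>u\<in>{u. supp_in R u}. A (merge R u s) (merge R u t)) else 0)"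

text \<open>|0>_R<0| tensor C\<close>
definition zt :: "'v set \<Rightarrow> 'v mat \<Rightarrow> 'v mat" where
  "zt R C = (\<lambda>s t. if (\<forall>x\<in>R. \<not> s x \<and> \<not> t x) then C (restr (- R) s) (restr (- R) t) else 0)"

definition models :: "'v::finite mat \<Rightarrow> 'v mat \<Rightarrow> bool" where
  "models \<rho> P \<longleftrightarrow> ran \<rho> \<subseteq> ran P"

datatype 'v prog =
    Skip
  | Abort
  | Init "'v set"
  | Apply "'v set" "'v mat"
  | Assert "'v mat" "'v set"
  | Spec "'v mat" "'v mat" "'v set"
  | PChoice "'v prog" real "'v prog"
  | Seq "'v prog" "'v prog"
  | If "'v mat" "'v set" "'v prog" "'v prog"   (* if P[q] then S1 else S0 end *)
  | While "'v mat" "'v set" "'v prog"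

primrec wf :: "'v::finite prog \<Rightarrow> bool" where
  "wf Skip = True"
| "wf Abort = True"
| "wf (Init q) = True"
| "wf (Apply q U) = is_unitary q U"
| "wf (Assert P q) = is_proj q P"
| "wf (Spec P Q q) = (is_proj q P \<and> is_proj q Q)"
| "wf (PChoice S0 p S1) = (0 \<le> p \<and> p \<le> 1 \<and> wf S0 \<and> wf S1)"
| "wf (Seq S0 S1) = (wf S0 \<and> wf S1)"
| "wf (If P q S1 S0) = (is_proj q P \<and> wf S1 \<and> wf S0)"
| "wf (While P q S) = (is_proj q P \<and> wf S)"

definition kraus :: "'v::finite mat list \<Rightarrow> 'v sop" where
  "kraus As \<rho> = (\<lambda>s t. \<Sum>A\<leftarrow>As. (A ** \<rho> ** madj A) s t)"

definition tni :: "'v set \<Rightarrow> 'v::finite sop \<Rightarrow> bool" where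
  "tni W E \<longleftrightarrow> (\<forall>\<rho>. on_reg W \<rho> \<and> psd \<rho> \<longrightarrow> Re (mtrace (E \<rho>)) \<le> Re (mtrace \<rho>))"

text \<open>Completely positive trace-non-increasing super-operators on H_W (given in Kraus form,
which in finite dimension covers exactly the completely positive maps), satisfying the
specification: all partial density operators on H_W satisfying P are mapped into Q.\<close>
definition spec_kraus :: "'v set \<Rightarrow> 'v::finite mat \<Rightarrow> 'v mat \<Rightarrow> 'v mat list set" where
  "spec_kraus q P Q = {As. (\<forall>A\<in>set As. on_reg q A) \<and> tni q (kraus As)
       \<and> (\<forall>\<rho>. pdo q \<rho> \<and> models \<rho> P \<longrightarrow> models (kraus As \<rho>) Q)}"

primrec loop_iter :: "'v::finite mat \<Rightarrow> (nat \<Rightarrow> 'v sop) \<Rightarrow> nat \<Rightarrow> 'v mat \<Rightarrow> 'v mat" where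
  "loop_iter P Es 0 \<rho> = \<rho>"
| "loop_iter P Es (Suc k) \<rho> = Es k (P ** loop_iter P Es k \<rho> ** P)"

primrec den :: "'v::finite prog \<Rightarrow> 'v sop set" where
  "den Skip = {id}"
| "den Abort = {(\<lambda>\<rho>. mzero)}"
| "den (Init q) = {(\<lambda>\<rho>. (\<lambda>s t. \<Sum>i\<in>{i. supp_in q i}.
        (ext q (ketbra zero_st i) ** \<rho> ** madj (ext q (ketbra zero_st i))) s t))}"
| "den (Apply q U) = {(\<lambda>\<rho>. ext q U ** \<rho> ** madj (ext q U))}"
| "den (Assert P q) = {(\<lambda>\<rho>. ext q P ** \<rho> ** ext q P)}"
| "den (Spec P Q q) = {kraus (map (ext q) As) | As. As \<in> spec_kraus q P Q}"
| "den (PChoice S0 p S1) = {(\<lambda>\<rho>. (\<lambda>s t. complex_of_real p * E0 \<rho> s t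
        + complex_of_real (1 - p) * E1 \<rho> s t)) | E0 E1. E0 \<in> den S0 \<and> E1 \<in> den S1}"
| "den (Seq S0 S1) = {E1 \<circ> E0 | E0 E1. E0 \<in> den S0 \<and> E1 \<in> den S1}"
| "den (If P q S1 S0) = {(\<lambda>\<rho>. madd (E1 (ext q P ** \<rho> ** ext q P))
        (E0 (ext q (pcomp q P) ** \<rho> ** ext q (pcomp q P)))) | E1 E0. E1 \<in> den S1 \<and> E0 \<in> den S0}"
| "den (While P q S) = {(\<lambda>\<rho>. (\<lambda>s t. \<Sum>k. (ext q (pcomp q P) ** loop_iter (ext q P) Es k \<rho>
        ** ext q (pcomp q P)) s t)) | Es. \<forall>k. Es k \<in> den S}"

definition hoare :: "'v::finite mat \<Rightarrow> 'v prog \<Rightarrow> 'v mat \<Rightarrow> bool" where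
  "hoare P S Q \<longleftrightarrow> (\<forall>\<rho> E. pdo UNIV \<rho> \<and> E \<in> den S \<and> models \<rho> P \<longrightarrow> models (E \<rho>) Q)"

section \<open>The refinement calculi\<close>

datatype mode = Wpc | Spc

text \<open>deriv m S T: S [= T is derivable from the structural, common and (m = Wpc) Wpc
resp. (m = Spc) Spc rules; equivalences are included in both directions.\<close>
inductive deriv :: "mode \<Rightarrow> 'v::finite prog \<Rightarrow> 'v prog \<Rightarrow> bool" for m :: mode where
  refl: "wf S \<Longrightarrow> deriv m S S"
| trans: "deriv m S0 S1 \<Longrightarrow> deriv m S1 S2 \<Longrightarrow> deriv m S0 S2"
| seq_mono: "deriv m S0 T0 \<Longrightarrow> deriv m S1 T1 \<Longrightarrow> deriv m (Seq S0 S1) (Seq T0 T1)"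
| pch_mono: "deriv m S0 T0 \<Longrightarrow> deriv m S1 T1 \<Longrightarrow> deriv m (PChoice S0 p S1) (PChoice T0 p T1)"
| if_mono: "deriv m S0 T0 \<Longrightarrow> deriv m S1 T1 \<Longrightarrow> deriv m (If P q S1 S0) (If P q T1 T0)"
| while_mono: "deriv m S T \<Longrightarrow> deriv m (While P q S) (While P q T)"
| c_bot: "is_proj q Q \<Longrightarrow> wf S \<Longrightarrow> deriv m (Spec mzero Q q) S"
| c_top: "is_proj q P \<Longrightarrow> wf S \<Longrightarrow> deriv m (Spec P (idW q) q) S"
| c_abort: "is_proj q P \<Longrightarrow> is_proj q Q \<Longrightarrow> deriv m (Spec P Q q) Abort"
| c_skip: "is_proj q P \<Longrightarrow> deriv m (Spec P P q) Skip"
| c_cons: "is_proj q P \<Longrightarrow> is_proj q Q \<Longrightarrow> is_proj q R \<Longrightarrow> is_proj q T \<Longrightarrow>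
           ple P R \<Longrightarrow> ple T Q \<Longrightarrow> deriv m (Spec P Q q) (Spec R T q)"
| c_seq: "is_proj q P \<Longrightarrow> is_proj q Q \<Longrightarrow> is_proj q R \<Longrightarrow>
          deriv m (Spec P Q q) (Seq (Spec P R q) (Spec R Q q))"
| w_init: "m = Wpc \<Longrightarrow> is_proj q Q \<Longrightarrow>
     deriv m (Spec (ext_within q (q - q) (eig1 (q - q) (bra0 q Q))) Q q) (Init q)"
| w_unit: "m = Wpc \<Longrightarrow> is_proj q Q \<Longrightarrow> is_unitary q U \<Longrightarrow>
     deriv m (Spec (madj U ** Q ** U) Q q) (Apply q U)"
| w_assert: "m = Wpc \<Longrightarrow> is_proj q P \<Longrightarrow> is_proj q Q \<Longrightarrow>
     deriv m (Spec (sasaki_imp q P Q) Q q) (Assert P q)"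
| w_pch1: "m = Wpc \<Longrightarrow> 0 < p \<Longrightarrow> p < 1 \<Longrightarrow> is_proj q P1 \<Longrightarrow> is_proj q P2 \<Longrightarrow> is_proj q Q \<Longrightarrow>
     P = pmeet q P1 P2 \<Longrightarrow> deriv m (Spec P Q q) (PChoice (Spec P1 Q q) p (Spec P2 Q q))"
| w_pch2: "m = Wpc \<Longrightarrow> 0 < p \<Longrightarrow> p < 1 \<Longrightarrow> is_proj q P1 \<Longrightarrow> is_proj q P2 \<Longrightarrow> is_proj q Q \<Longrightarrow>
     P = pmeet q P1 P2 \<Longrightarrow> deriv m (PChoice (Spec P1 Q q) p (Spec P2 Q q)) (Spec P Q q)"
| w_if1: "m = Wpc \<Longrightarrow> is_proj q P \<Longrightarrow> is_proj q P1 \<Longrightarrow> is_proj q P0 \<Longrightarrow> is_proj q Q \<Longrightarrow>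
     deriv m (Spec (pmeet q (sasaki_imp q P P1) (sasaki_imp q (pcomp q P) P0)) Q q)
             (If P q (Spec P1 Q q) (Spec P0 Q q))"
| w_if2: "m = Wpc \<Longrightarrow> is_proj q P \<Longrightarrow> is_proj q P1 \<Longrightarrow> is_proj q P0 \<Longrightarrow> is_proj q Q \<Longrightarrow>
     deriv m (If P q (Spec P1 Q q) (Spec P0 Q q))
             (Spec (pmeet q (sasaki_imp q P P1) (sasaki_imp q (pcomp q P) P0)) Q q)"
| w_while: "m = Wpc \<Longrightarrow> is_proj q P \<Longrightarrow> is_proj q Q \<Longrightarrow> is_proj q R \<Longrightarrow>
     deriv m (Spec (pmeet q (sasaki_imp q P Q) (sasaki_imp q (pcomp q P) R)) R q)
             (While P q (Spec Q (pmeet q (sasaki_imp q P Q) (sasaki_imp q (pcomp q P) R)) q))"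
| s_init: "m = Spc \<Longrightarrow> is_proj q P \<Longrightarrow>
     deriv m (Spec P (zt q (supp (q - q) (ptr q P))) q) (Init q)"
| s_unit: "m = Spc \<Longrightarrow> is_proj q P \<Longrightarrow> is_unitary q U \<Longrightarrow>
     deriv m (Spec P (U ** P ** madj U) q) (Apply q U)"
| s_assert: "m = Spc \<Longrightarrow> is_proj q P \<Longrightarrow> is_proj q Q \<Longrightarrow>
     deriv m (Spec P (sasaki_conj q Q P) q) (Assert Q q)"
| s_pch1: "m = Spc \<Longrightarrow> 0 < p \<Longrightarrow> p < 1 \<Longrightarrow> is_proj q P \<Longrightarrow> is_proj q Q1 \<Longrightarrow> is_proj q Q2 \<Longrightarrow>
     Q = pjoin q Q1 Q2 \<Longrightarrow> deriv m (Spec P Q q) (PChoice (Spec P Q1 q) p (Spec P Q2 q))"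
| s_pch2: "m = Spc \<Longrightarrow> 0 < p \<Longrightarrow> p < 1 \<Longrightarrow> is_proj q P \<Longrightarrow> is_proj q Q1 \<Longrightarrow> is_proj q Q2 \<Longrightarrow>
     Q = pjoin q Q1 Q2 \<Longrightarrow> deriv m (PChoice (Spec P Q1 q) p (Spec P Q2 q)) (Spec P Q q)"
| s_if: "m = Spc \<Longrightarrow> is_proj q P \<Longrightarrow> is_proj q Q \<Longrightarrow> is_proj q R \<Longrightarrow>
     deriv m (Spec P Q q)
             (If R q (Spec (sasaki_conj q R P) Q q) (Spec (sasaki_conj q (pcomp q R) P) Q q))"
| s_while: "m = Spc \<Longrightarrow> is_proj q P \<Longrightarrow> is_proj q Inv \<Longrightarrow>
     deriv m (Spec Inv (sasaki_conj q (pcomp q P) Inv) q)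
             (While P q (Spec (sasaki_conj q P Inv) Inv q))"

end

theory Submission
  imports Defs
begin

lemma mmult_assoc: "((A::'v::finite mat) ** B) ** C = A ** (B ** C)"
  unfolding mmult_def
  by (auto simp: sum_distrib_left sum_distrib_right mult.assoc intro!: ext sum.swap[THEN HOL.trans])

lemma mv_mmult: "mv ((A::'v::finite mat) ** B) x = mv A (mv B x)"
  unfolding mmult_def mv_def
  by (auto simp: sum_distrib_left sum_distrib_right mult.assoc intro!: ext sum.swap[THEN HOL.trans])

lemma madj_madj[simp]: "madj (madj A) = A" by (simp add: madj_def)

lemma madj_mmult: "madj ((A::'v::finite mat) ** B) = madj B ** madj A"
  unfolding madj_def mmult_def by (auto intro!: ext simp: mult.commute)

lemma mmult_madd_left: "madd (A::'v::finite mat) B ** C = madd (A ** C) (B ** C)"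
  unfolding madd_def mmult_def by (auto intro!: ext simp: distrib_right sum.distrib)
lemma mmult_madd_right: "C ** madd (A::'v::finite mat) B = madd (C ** A) (C ** B)"
  unfolding madd_def mmult_def by (auto intro!: ext simp: distrib_left sum.distrib)
lemma mmult_msub_left: "msub (A::'v::finite mat) B ** C = msub (A ** C) (B ** C)"
  unfolding msub_def mmult_def by (auto intro!: ext simp: left_diff_distrib sum_subtractf)
lemma mmult_msub_right: "C ** msub (A::'v::finite mat) B = msub (C ** A) (C ** B)"
  unfolding msub_def mmult_def by (auto intro!: ext simp: right_diff_distrib sum_subtractf)
lemma mmult_mzero[simp]: "(A::'v::finite mat) ** mzero = mzero" "mzero ** A = mzero"
  unfolding mzero_def mmult_def by auto
lemma madj_mzero[simp]: "madj mzero = mzero" by (simp add: madj_def mzero_def)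
lemma madj_msub: "madj (msub A B) = msub (madj A) (madj B)" by (auto simp: madj_def msub_def)
lemma madj_madd: "madj (madd A B) = madd (madj A) (madj B)" by (auto simp: madj_def madd_def)

lemma idW_UNIV_left[simp]: "idW UNIV ** (A::'v::finite mat) = A"
proof -
  have "\<And>s t. (\<Sum>u\<in>UNIV. (if s = u then 1 else 0) * A u t) = A s t"
    by (simp add: if_distrib[where f="\<lambda>x. x * _"] cong: if_cong)
  then show ?thesis unfolding idW_def mmult_def supp_in_def by auto
qed
lemma idW_UNIV_right[simp]: "(A::'v::finite mat) ** idW UNIV = A"
proof -
  have "\<And>s t. (\<Sum>u\<in>UNIV. A s u * (if u = t then 1 else 0)) = A s t"
    by (simp add: if_distrib[where f="\<lambda>x. _ * x"] cong: if_cong)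
  then show ?thesis unfolding idW_def mmult_def supp_in_def by auto
qed

lemma idW_left: assumes "on_reg W A" shows "idW W ** (A::'v::finite mat) = A"
proof -
  have "\<And>s t. (\<Sum>u\<in>UNIV. (if s = u \<and> supp_in W s then 1 else 0) * A u t) = A s t"
    using assms unfolding on_reg_def by (case_tac "supp_in W s") (auto simp: if_distrib[where f="\<lambda>x. x * _"] cong: if_cong)
  then show ?thesis unfolding idW_def mmult_def by auto
qed
lemma idW_right: assumes "on_reg W A" shows "(A::'v::finite mat) ** idW W = A"
proof -
  have "\<And>s t. (\<Sum>u\<in>UNIV. A s u * (if u = t \<and> supp_in W u then 1 else 0)) = A s t"
  proof -
    fix s t
    have "(\<Sum>u\<in>UNIV. A s u * (if u = t \<and> supp_in W u then 1 else 0)) = (\<Sum>u\<in>UNIV. if u = t then (if supp_in W t then A s t else 0) else 0)"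
      by (rule sum.cong) auto
    then show "(\<Sum>u\<in>UNIV. A s u * (if u = t \<and> supp_in W u then 1 else 0)) = A s t"
      using assms unfolding on_reg_def by auto
  qed
  then show ?thesis unfolding idW_def mmult_def by auto
qed

lemma on_reg_idW: "on_reg W (idW W)" by (auto simp: on_reg_def idW_def)
lemma madj_idW[simp]: "madj (idW W) = idW W" by (auto simp: madj_def idW_def intro!: ext)
lemma on_reg_mmult: "on_reg W A \<Longrightarrow> on_reg W B \<Longrightarrow> on_reg W ((A::'v::finite mat) ** B)"
  unfolding on_reg_def mmult_def by (metis (no_types, lifting) mult_eq_0_iff sum.neutral)
lemma on_reg_madj: "on_reg W A \<Longrightarrow> on_reg W (madj A)"
  unfolding on_reg_def madj_def by auto
lemma on_reg_msub: "on_reg W A \<Longrightarrow> on_reg W B \<Longrightarrow> on_reg W (msub A B)"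
  unfolding on_reg_def msub_def by (metis diff_zero)
lemma on_reg_madd: "on_reg W A \<Longrightarrow> on_reg W B \<Longrightarrow> on_reg W (madd A B)"
  unfolding on_reg_def madd_def by (metis add.right_neutral)
lemma on_reg_mzero[simp]: "on_reg W mzero" by (simp add: on_reg_def mzero_def)
lemma on_reg_UNIV[simp]: "on_reg UNIV A" by (simp add: on_reg_def supp_in_def)

definition evec :: "'v st \<Rightarrow> 'v vec" where "evec t = (\<lambda>s. if s = t then 1 else 0)"

lemma mv_evec: "mv (A::'v::finite mat) (evec t) = (\<lambda>s. A s t)"
  unfolding mv_def evec_def by (auto simp: if_distrib[where f="\<lambda>x. _ * x"] cong: if_cong)

lemma ran_mmult_sub: "ran ((A::'v::finite mat) ** B) \<subseteq> ran A"
  unfolding ran_def by (auto simp: mv_mmult)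

lemma models_iff: assumes "(P::'v::finite mat) ** P = P"
  shows "models \<rho> P \<longleftrightarrow> P ** \<rho> = \<rho>"
proof
  assume h: "models \<rho> P"
  show "P ** \<rho> = \<rho>"
  proof (rule ext, rule ext)
    fix s t
    have "mv \<rho> (evec t) \<in> ran P" using h unfolding models_def ran_def by auto
    then obtain y where y: "mv \<rho> (evec t) = mv P y" unfolding ran_def by auto
    have "mv P (mv \<rho> (evec t)) = mv \<rho> (evec t)" by (simp add: y flip: mv_mmult add: assms)
    then have "mv (P ** \<rho>) (evec t) s = mv \<rho> (evec t) s" by (simp add: mv_mmult)
    then show "(P ** \<rho>) s t = \<rho> s t" by (simp add: mv_evec)
  qed
next
  assume "P ** \<rho> = \<rho>"
  then show "models \<rho> P" unfolding models_def using ran_mmult_sub by metis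
qed

lemma ran_proj: assumes "(P::'v::finite mat) ** P = P" shows "x \<in> ran P \<longleftrightarrow> mv P x = x"
  unfolding ran_def using assms by (metis mv_mmult range_eqI rangeE)

definition agree :: "'v set \<Rightarrow> 'v st \<Rightarrow> 'v st \<Rightarrow> bool" where
  "agree q s t \<longleftrightarrow> (\<forall>x. x \<notin> q \<longrightarrow> s x = t x)"

lemma ext_eq: "ext q B s t = (if agree q s t then B (restr q s) (restr q t) else 0)"
  unfolding ext_def ext_within_def agree_def supp_in_def by auto

lemma restr_merge: "supp_in q v \<Longrightarrow> restr q (merge q v s) = v"
  unfolding restr_def merge_def supp_in_def by (auto intro!: ext)
lemma agree_merge: "agree q (merge q v s) s" "agree q s (merge q v s)"
  unfolding agree_def merge_def by auto
lemma merge_restr: "agree q u s \<Longrightarrow> merge q (restr q u) s = u"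
  unfolding agree_def merge_def restr_def by (auto intro!: ext)
lemma supp_in_UNIV[simp]: "supp_in UNIV s" by (simp add: supp_in_def)
lemma supp_in_restr: "supp_in q (restr q s)" unfolding supp_in_def restr_def by auto
lemma agree_sym: "agree q s t \<Longrightarrow> agree q t s" unfolding agree_def by auto
lemma agree_commute: "agree q s t \<longleftrightarrow> agree q t s" unfolding agree_def by auto
lemma agree_trans: "agree q s t \<Longrightarrow> agree q t u \<Longrightarrow> agree q s u" unfolding agree_def by auto
lemma agree_refl[simp]: "agree q s s" unfolding agree_def by auto

lemma sum_agree_reindex:
  fixes f :: "'v::finite st \<Rightarrow> 'a::comm_monoid_add"
  shows "(\<Sum>u\<in>{u. agree q u s}. f u) = (\<Sum>v\<in>{v. supp_in q v}. f (merge q v s))"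
proof -
  have "bij_betw (\<lambda>v. merge q v s) {v. supp_in q v} {u. agree q u s}"
  proof (rule bij_betw_byWitness[where f'="restr q"])
    show "\<forall>a\<in>{v. supp_in q v}. restr q (merge q a s) = a" by (auto simp: restr_merge)
    show "\<forall>a'\<in>{u. agree q u s}. merge q (restr q a') s = a'" by (auto simp: merge_restr)
    show "(\<lambda>v. merge q v s) ` {v. supp_in q v} \<subseteq> {u. agree q u s}" by (auto simp: agree_merge)
    show "restr q ` {u. agree q u s} \<subseteq> {v. supp_in q v}" by (auto simp: supp_in_restr)
  qed
  then show ?thesis by (simp add: sum.reindex_bij_betw[symmetric])
qed

lemma sum_supp_in_UNIV:
  fixes f :: "'v::finite st \<Rightarrow> 'a::comm_monoid_add"
  assumes "\<And>v. \<not> supp_in q v \<Longrightarrow> f v = 0"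
  shows "(\<Sum>v\<in>{v. supp_in q v}. f v) = (\<Sum>v\<in>UNIV. f v)"
  by (rule sum.mono_neutral_left) (auto simp: assms)

lemma sum_agree_UNIV:
  fixes f :: "'v::finite st \<Rightarrow> 'a::comm_monoid_add"
  assumes "\<And>u. \<not> agree q u s \<Longrightarrow> f u = 0"
  shows "(\<Sum>u\<in>UNIV. f u) = (\<Sum>u\<in>{u. agree q u s}. f u)"
  by (rule sum.mono_neutral_right) (auto simp: assms)

lemma ext_mmult:
  assumes A: "on_reg q A"
  shows "ext q ((A::'v::finite mat) ** B) = ext q A ** ext q B"
proof (rule ext, rule ext)
  fix s t
  show "ext q (A ** B) s t = (ext q A ** ext q B) s t"
  proof (cases "agree q s t")
    case True
    have "(ext q A ** ext q B) s t = (\<Sum>u\<in>UNIV. ext q A s u * ext q B u t)" by (simp add: mmult_def)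
    also have "\<dots> = (\<Sum>u\<in>{u. agree q u s}. ext q A s u * ext q B u t)"
      by (rule sum_agree_UNIV) (simp add: ext_eq agree_commute)
    also have "\<dots> = (\<Sum>v\<in>{v. supp_in q v}. ext q A s (merge q v s) * ext q B (merge q v s) t)"
      by (rule sum_agree_reindex)
    also have "\<dots> = (\<Sum>v\<in>{v. supp_in q v}. A (restr q s) v * B v (restr q t))"
      using True by (intro sum.cong) (auto simp: ext_eq agree_merge restr_merge
            intro: agree_trans[OF agree_merge(1)])
    also have "\<dots> = (\<Sum>v\<in>UNIV. A (restr q s) v * B v (restr q t))"
      by (rule sum_supp_in_UNIV) (use A in \<open>auto simp: on_reg_def\<close>)
    finally show ?thesis using True by (simp add: ext_eq mmult_def)
  next
    case False
    have z: "\<And>u. ext q A s u * ext q B u t = 0"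
    proof -
      fix u
      have "\<not> (agree q s u \<and> agree q u t)" using False agree_trans by blast
      then show "ext q A s u * ext q B u t = 0" unfolding ext_eq by auto
    qed
    have "(\<Sum>u\<in>UNIV. ext q A s u * ext q B u t) = 0" using z by (intro sum.neutral) blast
    moreover have "ext q (A ** B) s t = 0" using False unfolding ext_eq by simp
    ultimately show ?thesis unfolding mmult_def by simp
  qed
qed

lemma ext_madj: "ext q (madj A) = madj (ext q A)"
  by (auto intro!: ext simp: ext_eq madj_def agree_commute)
lemma ext_msub: "ext q (msub A B) = msub (ext q A) (ext q B)"
  by (auto intro!: ext simp: ext_eq msub_def)
lemma ext_madd: "ext q (madd A B) = madd (ext q A) (ext q B)"
  by (auto intro!: ext simp: ext_eq madd_def)
lemma ext_mzero[simp]: "ext q mzero = mzero"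
  by (auto intro!: ext simp: ext_eq mzero_def)
lemma ext_idW: "ext q (idW q) = idW UNIV"
proof (rule ext, rule ext)
  fix s t
  have "agree q s t \<and> restr q s = restr q t \<longleftrightarrow> s = t"
  proof
    assume a: "agree q s t \<and> restr q s = restr q t"
    show "s = t"
    proof
      fix x
      show "s x = t x"
      proof (cases "x \<in> q")
        case True
        then show ?thesis using fun_cong[OF conjunct2[OF a], of x] by (simp add: restr_def)
      next
        case False
        then show ?thesis using a by (simp add: agree_def)
      qed
    qed
  qed simp
  then show "ext q (idW q) s t = idW UNIV s t"
    using supp_in_restr[of q s] by (auto simp: ext_eq idW_def supp_in_UNIV)
qed

lemma is_proj_ext: assumes "is_proj q P" shows "is_proj UNIV (ext q P)"
  using assms unfolding is_proj_def by (auto simp: ext_mmult[symmetric] ext_madj[symmetric])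

definition pc :: "'v set \<Rightarrow> 'v mat \<Rightarrow> 'v mat" where "pc q P = msub (idW q) P"

lemma pcomp_eq: "pcomp q P = msub (idW q) P" by (simp add: pcomp_def)

lemma is_proj_pcomp: assumes "is_proj q P" shows "is_proj q (pcomp q P)"
proof -
  have o: "on_reg q P" "P ** P = P" "madj P = P" using assms by (auto simp: is_proj_def)
  have "pcomp q P ** pcomp q P = pcomp q P"
    unfolding pcomp_def using o on_reg_idW[of q]
    by (simp add: mmult_msub_left mmult_msub_right idW_left idW_right)
       (auto simp: msub_def intro!: ext)
  then show ?thesis using o on_reg_idW[of q] unfolding is_proj_def pcomp_def
    by (auto simp: on_reg_msub madj_msub)
qed

lemma ext_pcomp: "ext q (pcomp q P) = msub (idW UNIV) (ext q P)"
  by (simp add: pcomp_def ext_msub ext_idW)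

lemma pcomp_pcomp: "on_reg q P \<Longrightarrow> pcomp q (pcomp q P) = P"
  unfolding pcomp_def msub_def on_reg_def idW_def by (auto intro!: ext)

definition subsp :: "'v set \<Rightarrow> 'v vec set \<Rightarrow> bool" where
  "subsp W S \<longleftrightarrow> (\<lambda>s. 0) \<in> S \<and> (\<forall>x\<in>S. \<forall>y\<in>S. (\<lambda>s. x s + y s) \<in> S)
     \<and> (\<forall>c. \<forall>x\<in>S. (\<lambda>s. c * x s) \<in> S) \<and> (\<forall>x\<in>S. \<forall>s. x s \<noteq> 0 \<longrightarrow> supp_in W s)"

definition ip :: "'v::finite vec \<Rightarrow> 'v vec \<Rightarrow> complex" where
  "ip x y = (\<Sum>s\<in>UNIV. cnj (x s) * y s)"

lemma cnj_mult_self: "cnj z * z = complex_of_real ((cmod z)^2)"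
  by (metis complex_norm_square mult.commute)

lemma subsp_zero: "subsp W S \<Longrightarrow> (\<lambda>s. 0) \<in> S" unfolding subsp_def by blast
lemma subsp_add: "subsp W S \<Longrightarrow> x \<in> S \<Longrightarrow> y \<in> S \<Longrightarrow> (\<lambda>s. x s + y s) \<in> S"
  unfolding subsp_def by blast
lemma subsp_scale: "subsp W S \<Longrightarrow> x \<in> S \<Longrightarrow> (\<lambda>s. c * x s) \<in> S"
  unfolding subsp_def by blast
lemma subsp_supp: "subsp W S \<Longrightarrow> x \<in> S \<Longrightarrow> x s \<noteq> 0 \<Longrightarrow> supp_in W s"
  unfolding subsp_def by blast

lemma mv_add: "mv (A::'v::finite mat) (\<lambda>s. x s + y s) = (\<lambda>s. mv A x s + mv A y s)"
  unfolding mv_def by (auto simp: distrib_left sum.distrib)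
lemma mv_scale: "mv (A::'v::finite mat) (\<lambda>s. c * x s) = (\<lambda>s. c * mv A x s)"
  unfolding mv_def by (auto simp: sum_distrib_left mult.left_commute)
lemma mv_zero: "mv (A::'v::finite mat) (\<lambda>s. 0) = (\<lambda>s. 0)"
  unfolding mv_def by auto

lemma subsp_ran: assumes "on_reg W (A::'v::finite mat)" shows "subsp W (ran A)"
proof -
  have "(\<lambda>s. 0) \<in> ran A" unfolding ran_def by (rule image_eqI[where x="\<lambda>s. 0"]) (simp_all add: mv_zero)
  moreover have "\<forall>x\<in>ran A. \<forall>y\<in>ran A. (\<lambda>s. x s + y s) \<in> ran A"
    unfolding ran_def by (auto simp flip: mv_add)
  moreover have "\<forall>c. \<forall>x\<in>ran A. (\<lambda>s. c * x s) \<in> ran A"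
    unfolding ran_def by (auto simp flip: mv_scale)
  moreover have "\<forall>x\<in>ran A. \<forall>s. x s \<noteq> 0 \<longrightarrow> supp_in W s"
  proof (intro ballI allI impI)
    fix x s assume "x \<in> ran A" "x s \<noteq> 0"
    then obtain y where "x = mv A y" unfolding ran_def by auto
    with \<open>x s \<noteq> 0\<close> obtain t where "A s t \<noteq> 0" unfolding mv_def
      by (metis (no_types, lifting) mult_eq_0_iff sum.neutral)
    then show "supp_in W s" using assms unfolding on_reg_def by auto
  qed
  ultimately show ?thesis unfolding subsp_def by blast
qed

lemma proj_unique:
  assumes "is_proj W P" "is_proj W (Q::'v::finite mat)" "ran P = ran Q"
  shows "P = Q"
proof -
  have "P ** Q = Q" using assms models_iff[of P Q] unfolding is_proj_def models_def by auto
  moreover have "Q ** P = P" using assms models_iff[of Q P] unfolding is_proj_def models_def by auto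
  ultimately show ?thesis using assms unfolding is_proj_def by (metis madj_mmult)
qed

lemma diag_proj:
  assumes "is_proj W (P::'v::finite mat)"
  shows "P s s = of_real (\<Sum>u\<in>UNIV. (cmod (P u s))^2)" "Re (P s s) \<le> 1" "0 \<le> Re (P s s)"
proof -
  have h: "P ** P = P" "madj P = P" using assms by (auto simp: is_proj_def)
  have c: "\<And>u. P s u = cnj (P u s)" using fun_cong[OF fun_cong[OF h(2)]] unfolding madj_def by simp
  have "P s s = (\<Sum>u\<in>UNIV. P s u * P u s)" using fun_cong[OF fun_cong[OF h(1)], of s s] unfolding mmult_def by simp
  also have "\<dots> = (\<Sum>u\<in>UNIV. of_real ((cmod (P u s))^2))"
    by (rule sum.cong) (simp_all only: c cnj_mult_self)
  finally show e: "P s s = of_real (\<Sum>u\<in>UNIV. (cmod (P u s))^2)" by (simp only: of_real_sum)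
  have "(cmod (P s s))^2 \<le> (\<Sum>u\<in>UNIV. (cmod (P u s))^2)"
    by (rule member_le_sum) auto
  moreover have "cmod (P s s) = (\<Sum>u\<in>UNIV. (cmod (P u s))^2)"
    unfolding e norm_of_real by (simp add: sum_nonneg)
  ultimately have sq: "cmod (P s s) * cmod (P s s) \<le> cmod (P s s) * 1" by (simp add: power2_eq_square)
  have "cmod (P s s) \<le> 1"
  proof (cases "cmod (P s s) = 0")
    case False
    then have "0 < cmod (P s s)" by simp
    then show ?thesis using sq mult_le_cancel_left_pos by blast
  qed simp
  then show "Re (P s s) \<le> 1" using complex_Re_le_cmod order_trans by blast
  show "0 \<le> Re (P s s)" using e by (simp add: sum_nonneg)
qed

lemma trace_proj_le: "is_proj W (P::'v::finite mat) \<Longrightarrow> Re (mtrace P) \<le> real (card (UNIV :: 'v st set))"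
proof -
  assume a: "is_proj W P"
  have "Re (mtrace P) = (\<Sum>s\<in>UNIV. Re (P s s))" by (simp add: mtrace_def)
  also have "\<dots> \<le> (\<Sum>s\<in>(UNIV::'v st set). 1)" by (rule sum_mono) (use diag_proj[OF a] in auto)
  finally show ?thesis by simp
qed

definition rk1 :: "'v::finite vec \<Rightarrow> 'v mat" where
  "rk1 w = (\<lambda>s t. w s * cnj (w t) / ip w w)"

lemma ip_self_real: "ip w w = of_real (\<Sum>s\<in>UNIV. (cmod (w s))^2)"
  unfolding ip_def of_real_sum by (rule sum.cong) (simp_all only: cnj_mult_self)

lemma ip_self_pos: assumes "w \<noteq> (\<lambda>s. 0)" shows "ip w w \<noteq> 0"
proof -
  obtain s where "w s \<noteq> 0" using assms by auto
  then have "0 < (cmod (w s))^2" by simp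
  also have "\<dots> \<le> (\<Sum>s\<in>UNIV. (cmod (w s))^2)" by (rule member_le_sum) auto
  finally have "0 < (\<Sum>s\<in>UNIV. (cmod (w s))^2)" .
  then show ?thesis unfolding ip_self_real of_real_eq_0_iff by linarith
qed

lemma proj_extend:
  assumes P: "is_proj W (P::'v::finite mat)" and w0: "w \<noteq> (\<lambda>s. 0)" and Pw: "mv P w = (\<lambda>s. 0)"
    and wW: "\<forall>s. w s \<noteq> 0 \<longrightarrow> supp_in W s"
  shows "is_proj W (madd P (rk1 w))" "mtrace (madd P (rk1 w)) = mtrace P + 1"
    "\<And>x. mv (madd P (rk1 w)) x = (\<lambda>s. mv P x s + (ip w x / ip w w) * w s)"
proof -
  have h: "on_reg W P" "P ** P = P" "madj P = P" using P by (auto simp: is_proj_def)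
  have n: "ip w w \<noteq> 0" using ip_self_pos[OF w0] .
  have c: "\<And>s u. cnj (P s u) = P u s" using fun_cong[OF fun_cong[OF h(3)]] unfolding madj_def by simp
  have Pw': "\<And>s. (\<Sum>u\<in>UNIV. P s u * w u) = 0" using fun_cong[OF Pw] unfolding mv_def by simp
  have wP: "\<And>t. (\<Sum>u\<in>UNIV. cnj (w u) * P u t) = 0"
  proof -
    fix t
    have "(\<Sum>u\<in>UNIV. cnj (w u) * P u t) = cnj (\<Sum>u\<in>UNIV. P t u * w u)"
      by (simp add: cnj_sum c mult.commute)
    then show "(\<Sum>u\<in>UNIV. cnj (w u) * P u t) = 0" using Pw' by simp
  qed
  have Prk: "P ** rk1 w = mzero"
  proof -
    have "\<And>s t. (\<Sum>u\<in>UNIV. P s u * (w u * cnj (w t) / ip w w)) = (\<Sum>u\<in>UNIV. P s u * w u) * cnj (w t) / ip w w"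
      by (simp add: sum_divide_distrib sum_distrib_right mult.assoc)
    then show ?thesis unfolding mmult_def rk1_def mzero_def using Pw' by auto
  qed
  have rkP: "rk1 w ** P = mzero"
  proof -
    have "\<And>s t. (\<Sum>u\<in>UNIV. (w s * cnj (w u) / ip w w) * P u t) = w s * (\<Sum>u\<in>UNIV. cnj (w u) * P u t) / ip w w"
      by (simp add: sum_divide_distrib sum_distrib_left mult.assoc)
    then show ?thesis unfolding mmult_def rk1_def mzero_def using wP by auto
  qed
  have rkrk: "rk1 w ** rk1 w = rk1 w"
  proof -
    have "\<And>s t. (\<Sum>u\<in>UNIV. (w s * cnj (w u) / ip w w) * (w u * cnj (w t) / ip w w))
       = w s * cnj (w t) * ip w w / (ip w w * ip w w)"
      by (simp add: ip_def sum_divide_distrib sum_distrib_left sum_distrib_right algebra_simps)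
    then show ?thesis unfolding mmult_def rk1_def using n by auto
  qed
  have "madd P (rk1 w) ** madd P (rk1 w) = madd P (rk1 w)"
    by (simp add: mmult_madd_left mmult_madd_right Prk rkP rkrk h(2)) (auto simp: madd_def mzero_def)
  moreover have "madj (rk1 w) = rk1 w"
  proof -
    have "cnj (ip w w) = ip w w" by (simp add: ip_self_real)
    then show ?thesis unfolding madj_def rk1_def by (auto intro!: ext simp: mult.commute)
  qed
  moreover have "on_reg W (rk1 w)" unfolding on_reg_def rk1_def using wW by auto
  ultimately show "is_proj W (madd P (rk1 w))" using h
    by (auto simp: is_proj_def on_reg_madd madj_madd)
  have "mtrace (rk1 w) = 1"
    unfolding mtrace_def rk1_def using n by (simp add: ip_def sum_divide_distrib[symmetric] mult.commute)
  then show "mtrace (madd P (rk1 w)) = mtrace P + 1"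
    unfolding mtrace_def madd_def by (simp add: sum.distrib)
  fix x
  show "mv (madd P (rk1 w)) x = (\<lambda>s. mv P x s + (ip w x / ip w w) * w s)"
    unfolding mv_def madd_def rk1_def ip_def
    by (auto intro!: ext simp: distrib_right sum.distrib sum_divide_distrib sum_distrib_left algebra_simps)
qed

lemma subsp_diff: "subsp W S \<Longrightarrow> x \<in> S \<Longrightarrow> y \<in> S \<Longrightarrow> (\<lambda>s. x s - y s) \<in> S"
proof -
  assume a: "subsp W S" "x \<in> S" "y \<in> S"
  have "(\<lambda>s. (-1) * y s) \<in> S" using a(1,3) by (rule subsp_scale)
  then have "(\<lambda>s. x s + (-1) * y s) \<in> S" using a subsp_add by blast
  then show ?thesis by simp
qed

lemma proj_exists_aux:
  assumes S: "subsp W (S::'v::finite vec set)"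
  shows "(\<exists>P. is_proj W P \<and> ran P \<subseteq> S \<and> Re (mtrace P) = real k) \<or> (\<exists>P. is_proj W P \<and> ran P = S)"
proof (induction k)
  case 0
  have "is_proj W mzero" by (simp add: is_proj_def)
  moreover have "ran (mzero::'v mat) \<subseteq> S" using S unfolding ran_def subsp_def mv_def mzero_def by auto
  moreover have "Re (mtrace (mzero::'v mat)) = 0" by (simp add: mtrace_def mzero_def)
  ultimately show ?case by auto
next
  case (Suc k)
  show ?case
  proof (cases "\<exists>P. is_proj W P \<and> ran P = S")
    case True then show ?thesis by blast
  next
    case False
    with Suc obtain P where P: "is_proj W P" "ran P \<subseteq> S" "Re (mtrace P) = real k" by blast
    with False obtain v where v: "v \<in> S" "v \<notin> ran P" by blast
    have PP: "P ** P = P" using P by (simp add: is_proj_def)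
    define w where "w = (\<lambda>s. v s - mv P v s)"
    have Pv: "mv P v \<in> ran P" unfolding ran_def by auto
    have wS: "w \<in> S" unfolding w_def using subsp_diff[OF S v(1)] Pv P(2) by auto
    have Pw: "mv P w = (\<lambda>s. 0)"
    proof -
      have "mv P (mv P v) = mv P v" by (simp flip: mv_mmult add: PP)
      then show ?thesis unfolding w_def using mv_add[of P v "\<lambda>s. - mv P v s"] mv_scale[of P "-1" "mv P v"]
        by (auto intro!: ext)
    qed
    have w0: "w \<noteq> (\<lambda>s. 0)"
    proof
      assume "w = (\<lambda>s. 0)"
      then have "v = mv P v" unfolding w_def by (metis eq_iff_diff_eq_0 ext)
      then show False using v Pv by auto
    qed
    have wW: "\<forall>s. w s \<noteq> 0 \<longrightarrow> supp_in W s" using wS S unfolding subsp_def by blast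
    note E = proj_extend[OF P(1) w0 Pw wW]
    have "ran (madd P (rk1 w)) \<subseteq> S"
    proof
      fix y assume "y \<in> ran (madd P (rk1 w))"
      then obtain x where x: "y = mv (madd P (rk1 w)) x" unfolding ran_def by auto
      have a: "mv P x \<in> S" using P(2) unfolding ran_def by auto
      have b: "(\<lambda>s. (ip w x / ip w w) * w s) \<in> S" using wS S subsp_scale by blast
      show "y \<in> S" unfolding x E(3) using subsp_add[OF S a b] by simp
    qed
    moreover have "Re (mtrace (madd P (rk1 w))) = real (Suc k)" using E(2) P(3) by simp
    ultimately show ?thesis using E(1) by blast
  qed
qed

lemma proj_exists: assumes "subsp W (S::'v::finite vec set)" shows "\<exists>P. is_proj W P \<and> ran P = S"
proof -
  from proj_exists_aux[OF assms, of "Suc (card (UNIV :: 'v st set))"]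
  show ?thesis using trace_proj_le by fastforce
qed

lemma proj_onto:
  assumes "subsp W (S::'v::finite vec set)"
  shows "is_proj W (proj_onto W S)" "ran (proj_onto W S) = S"
proof -
  obtain P where P: "is_proj W P" "ran P = S" using proj_exists[OF assms] by blast
  have "(THE P. is_proj W P \<and> ran P = S) = P"
    by (rule the_equality) (use P proj_unique in auto)
  then show "is_proj W (proj_onto W S)" "ran (proj_onto W S) = S" using P by (auto simp: proj_onto_def)
qed

lemma is_projD: assumes "is_proj W P"
  shows "on_reg W P" "P ** P = P" "madj P = P"
  using assms by (auto simp: is_proj_def)

lemma subsp_inter: "subsp W S \<Longrightarrow> subsp W T \<Longrightarrow> subsp W (S \<inter> T)"
  unfolding subsp_def by blast

lemma sum_mem: "x \<in> S \<Longrightarrow> y \<in> T \<Longrightarrow> (\<lambda>s. x s + y s) \<in> {(\<lambda>s. x s + y s) | x y. x \<in> S \<and> y \<in> T}"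
  by blast

lemma sum_memE: "u \<in> {(\<lambda>s. x s + y s) | x y. x \<in> S \<and> y \<in> T} \<Longrightarrow> (\<And>x y. u = (\<lambda>s. x s + y s) \<Longrightarrow> x \<in> S \<Longrightarrow> y \<in> T \<Longrightarrow> thesis) \<Longrightarrow> thesis"
  by blast

lemma subsp_sum: assumes "subsp W S" "subsp W T"
  shows "subsp W {(\<lambda>s. x s + y s) | x y. x \<in> S \<and> y \<in> T}"
proof -
  let ?U = "{(\<lambda>s. x s + y s) | x y. x \<in> S \<and> y \<in> T}"
  have "(\<lambda>s. 0) \<in> ?U" using sum_mem[OF subsp_zero[OF assms(1)] subsp_zero[OF assms(2)]] by simp
  moreover have "\<forall>u\<in>?U. \<forall>v\<in>?U. (\<lambda>s. u s + v s) \<in> ?U"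
  proof (intro ballI)
    fix u v assume "u \<in> ?U" "v \<in> ?U"
    obtain x1 y1 where 1: "u = (\<lambda>s. x1 s + y1 s)" "x1 \<in> S" "y1 \<in> T" using \<open>u \<in> ?U\<close> by (rule sum_memE)
    obtain x2 y2 where 2: "v = (\<lambda>s. x2 s + y2 s)" "x2 \<in> S" "y2 \<in> T" using \<open>v \<in> ?U\<close> by (rule sum_memE)
    have "(\<lambda>s. x1 s + x2 s) \<in> S" by (rule subsp_add[OF assms(1) 1(2) 2(2)])
    moreover have "(\<lambda>s. y1 s + y2 s) \<in> T" by (rule subsp_add[OF assms(2) 1(3) 2(3)])
    ultimately have "(\<lambda>s. (x1 s + x2 s) + (y1 s + y2 s)) \<in> ?U" by (rule sum_mem)
    moreover have "(\<lambda>s. u s + v s) = (\<lambda>s. (x1 s + x2 s) + (y1 s + y2 s))" unfolding 1 2 by (simp add: algebra_simps)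
    ultimately show "(\<lambda>s. u s + v s) \<in> ?U" by simp
  qed
  moreover have "\<forall>c. \<forall>u\<in>?U. (\<lambda>s. c * u s) \<in> ?U"
  proof (intro ballI allI)
    fix c u assume "u \<in> ?U"
    obtain x1 y1 where 1: "u = (\<lambda>s. x1 s + y1 s)" "x1 \<in> S" "y1 \<in> T" using \<open>u \<in> ?U\<close> by (rule sum_memE)
    have "(\<lambda>s. c * x1 s) \<in> S" by (rule subsp_scale[OF assms(1) 1(2)])
    moreover have "(\<lambda>s. c * y1 s) \<in> T" by (rule subsp_scale[OF assms(2) 1(3)])
    ultimately have "(\<lambda>s. c * x1 s + c * y1 s) \<in> ?U" by (rule sum_mem)
    moreover have "(\<lambda>s. c * u s) = (\<lambda>s. c * x1 s + c * y1 s)" unfolding 1 by (simp add: algebra_simps)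
    ultimately show "(\<lambda>s. c * u s) \<in> ?U" by simp
  qed
  moreover have "\<forall>u\<in>?U. \<forall>s. u s \<noteq> 0 \<longrightarrow> supp_in W s"
  proof (intro ballI allI impI)
    fix u s assume "u \<in> ?U" "u s \<noteq> 0"
    obtain x1 y1 where 1: "u = (\<lambda>s. x1 s + y1 s)" "x1 \<in> S" "y1 \<in> T" using \<open>u \<in> ?U\<close> by (rule sum_memE)
    have "x1 s \<noteq> 0 \<or> y1 s \<noteq> 0" using \<open>u s \<noteq> 0\<close> 1(1) by auto
    then show "supp_in W s" using subsp_supp[OF assms(1) 1(2)] subsp_supp[OF assms(2) 1(3)] by blast
  qed
  ultimately show ?thesis unfolding subsp_def by blast
qed

lemma pmeet_props: assumes "is_proj W P" "is_proj W Q"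
  shows "is_proj W (pmeet W P Q)" "ran (pmeet W P Q) = ran P \<inter> ran Q"
proof -
  have "subsp W (ran P \<inter> ran Q)" using subsp_inter subsp_ran is_projD(1) assms by blast
  note r = proj_onto[OF this]
  show "is_proj W (pmeet W P Q)" unfolding pmeet_def by (rule r(1))
  show "ran (pmeet W P Q) = ran P \<inter> ran Q" unfolding pmeet_def by (rule r(2))
qed

lemma pjoin_props: assumes "is_proj W P" "is_proj W Q"
  shows "is_proj W (pjoin W P Q)" "ran (pjoin W P Q) = {(\<lambda>s. x s + y s) | x y. x \<in> ran P \<and> y \<in> ran Q}"
proof -
  have "subsp W {(\<lambda>s. x s + y s) | x y. x \<in> ran P \<and> y \<in> ran Q}"
    using subsp_sum subsp_ran is_projD(1) assms by blast
  note r = proj_onto[OF this]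
  show "is_proj W (pjoin W P Q)" unfolding pjoin_def by (rule r(1))
  show "ran (pjoin W P Q) = {(\<lambda>s. x s + y s) | x y. x \<in> ran P \<and> y \<in> ran Q}" unfolding pjoin_def by (rule r(2))
qed

lemma sasaki_imp_proj: "is_proj W P \<Longrightarrow> is_proj W Q \<Longrightarrow> is_proj W (sasaki_imp W P Q)"
  unfolding sasaki_imp_def by (intro pjoin_props pmeet_props is_proj_pcomp) auto

lemma sasaki_conj_proj: "is_proj W P \<Longrightarrow> is_proj W Q \<Longrightarrow> is_proj W (sasaki_conj W P Q)"
  unfolding sasaki_conj_def by (intro pjoin_props pmeet_props is_proj_pcomp) auto

lemma mv_msub: "mv (msub (A::'v::finite mat) B) x = (\<lambda>s. mv A x s - mv B x s)"
  unfolding mv_def msub_def by (auto simp: left_diff_distrib sum_subtractf)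

lemma mv_idW: "(\<forall>s. x s \<noteq> 0 \<longrightarrow> supp_in W s) \<Longrightarrow> mv (idW W) (x::'v::finite vec) = x"
proof
  fix s assume a: "\<forall>s. x s \<noteq> 0 \<longrightarrow> supp_in W s"
  have "mv (idW W) x s = (\<Sum>t\<in>UNIV. if t = s then (if supp_in W s then x s else 0) else 0)"
    unfolding mv_def idW_def by (rule sum.cong) auto
  then show "mv (idW W) x s = x s" using a by auto
qed

lemma ran_supp: "on_reg W A \<Longrightarrow> y \<in> ran (A::'v::finite mat) \<Longrightarrow> \<forall>s. y s \<noteq> 0 \<longrightarrow> supp_in W s"
  using subsp_ran subsp_supp by blast

lemma mv_pcomp: assumes "is_proj W P" "\<forall>s. y s \<noteq> 0 \<longrightarrow> supp_in W s"
  shows "mv (pcomp W P) y = (\<lambda>s. y s - mv P y s)"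
  unfolding pcomp_def mv_msub mv_idW[OF assms(2)] ..

lemma ran_pcomp_P: assumes "is_proj W (P::'v::finite mat)" "a \<in> ran (pcomp W P)"
  shows "mv P a = (\<lambda>s. 0)"
proof -
  obtain z where z: "a = mv (pcomp W P) z" using assms(2) unfolding ran_def by auto
  have "P ** pcomp W P = mzero"
    using is_projD[OF assms(1)] unfolding pcomp_def
    by (simp add: mmult_msub_right idW_right) (auto simp: msub_def mzero_def)
  then have "mv (P ** pcomp W P) z = (\<lambda>s. 0)" by (simp add: mv_def mzero_def)
  then show ?thesis unfolding z mv_mmult .
qed

lemma mv_proj_ran: "is_proj W (P::'v::finite mat) \<Longrightarrow> mv P y \<in> ran P"
  unfolding ran_def by auto

lemma proj_fix: "is_proj W (P::'v::finite mat) \<Longrightarrow> y \<in> ran P \<Longrightarrow> mv P y = y"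
  using ran_proj is_projD by blast

lemma pcomp_ran_intro: assumes "is_proj W (P::'v::finite mat)" "\<forall>s. y s \<noteq> 0 \<longrightarrow> supp_in W s"
  shows "(\<lambda>s. y s - mv P y s) \<in> ran (pcomp W P)"
  using mv_proj_ran[OF is_proj_pcomp[OF assms(1)], of y] mv_pcomp[OF assms] by simp

lemma sasaki_imp_ran: assumes P: "is_proj W P" and Q: "is_proj W Q" and y: "y \<in> ran (sasaki_imp W P Q)"
  shows "mv P y \<in> ran Q"
proof -
  have "y \<in> {(\<lambda>s. x s + y s) | x y. x \<in> ran (pcomp W P) \<and> y \<in> ran (pmeet W P Q)}"
    using y pjoin_props(2)[OF is_proj_pcomp[OF P] pmeet_props(1)[OF P Q]] unfolding sasaki_imp_def by simp
  then obtain a b where ab: "y = (\<lambda>s. a s + b s)" "a \<in> ran (pcomp W P)" "b \<in> ran (pmeet W P Q)"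
    by (rule sum_memE)
  have b: "b \<in> ran P" "b \<in> ran Q" using ab(3) pmeet_props(2)[OF P Q] by auto
  have "mv P y = (\<lambda>s. mv P a s + mv P b s)" unfolding ab(1) mv_add ..
  also have "\<dots> = b" using ran_pcomp_P[OF P ab(2)] proj_fix[OF P b(1)] by simp
  finally show ?thesis using b by simp
qed

lemma sasaki_imp_ran_rev: assumes P: "is_proj W P" and Q: "is_proj W Q"
  and ys: "\<forall>s. y s \<noteq> 0 \<longrightarrow> supp_in W s" and y: "mv P y \<in> ran Q"
  shows "y \<in> ran (sasaki_imp W P Q)"
proof -
  have a: "(\<lambda>s. y s - mv P y s) \<in> ran (pcomp W P)" by (rule pcomp_ran_intro[OF P ys])
  have b: "mv P y \<in> ran (pmeet W P Q)" using pmeet_props(2)[OF P Q] mv_proj_ran[OF P] y by auto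
  have "y = (\<lambda>s. (y s - mv P y s) + mv P y s)" by simp
  also have "\<dots> \<in> ran (pjoin W (pcomp W P) (pmeet W P Q))"
    using sum_mem[OF a b] pjoin_props(2)[OF is_proj_pcomp[OF P] pmeet_props(1)[OF P Q]] by simp
  finally show ?thesis unfolding sasaki_imp_def .
qed

lemma sasaki_conj_ran: assumes P: "is_proj W P" and Q: "is_proj W Q" and y: "y \<in> ran Q"
  shows "mv P y \<in> ran (sasaki_conj W P Q)"
proof -
  have ys: "\<forall>s. y s \<noteq> 0 \<longrightarrow> supp_in W s" using ran_supp is_projD(1)[OF Q] y by blast
  have a: "(\<lambda>s. y s - mv P y s) \<in> ran (pcomp W P)" by (rule pcomp_ran_intro[OF P ys])
  have c: "(\<lambda>s. (-1) * (y s - mv P y s)) \<in> ran (pcomp W P)"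
    using subsp_scale[OF subsp_ran[OF is_projD(1)[OF is_proj_pcomp[OF P]]] a] .
  have "mv P y = (\<lambda>s. (-1) * (y s - mv P y s) + y s)" by simp
  also have "\<dots> \<in> ran (pjoin W (pcomp W P) Q)"
    using sum_mem[OF c y] pjoin_props(2)[OF is_proj_pcomp[OF P] Q] by simp
  finally have "mv P y \<in> ran (pjoin W (pcomp W P) Q)" .
  then show ?thesis using mv_proj_ran[OF P] pmeet_props(2)[OF P pjoin_props(1)[OF is_proj_pcomp[OF P] Q]]
    unfolding sasaki_conj_def by blast
qed

lemma ran_sub_iff: "(P::'v::finite mat) ** P = P \<Longrightarrow> ran A \<subseteq> ran P \<longleftrightarrow> P ** A = A"
  using models_iff[of P A] by (simp add: models_def)

lemma ran_sub_mv: "ran (A::'v::finite mat) \<subseteq> S \<longleftrightarrow> (\<forall>x. mv A x \<in> S)"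
  unfolding ran_def by auto

lemma ran_mmult: "ran ((A::'v::finite mat) ** B) = mv A ` ran B"
  unfolding ran_def by (auto simp: mv_mmult image_iff)

lemma qf_ip: "qf (A::'v::finite mat) x = ip x (mv A x)"
  unfolding qf_def ip_def mv_def by (simp add: sum_distrib_left mult.assoc)

lemma ip_adj: "ip x (mv (A::'v::finite mat) y) = ip (mv (madj A) x) y"
  unfolding ip_def mv_def madj_def
  by (simp add: sum_distrib_left sum_distrib_right cnj_sum mult_ac) (rule sum.swap)

lemma ip_add2: "ip x (\<lambda>s. y s + z s) = ip x y + ip (x::'v::finite vec) z"
  unfolding ip_def by (simp add: distrib_left sum.distrib)
lemma ip_scale2: "ip x (\<lambda>s. c * y s) = c * ip (x::'v::finite vec) y"
  unfolding ip_def by (simp add: sum_distrib_left mult_ac)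
lemma ip_add1: "ip (\<lambda>s. x s + z s) y = ip x y + ip (z::'v::finite vec) y"
  unfolding ip_def by (simp add: distrib_right sum.distrib)
lemma ip_scale1: "ip (\<lambda>s. c * x s) y = cnj c * ip (x::'v::finite vec) y"
  unfolding ip_def by (simp add: sum_distrib_left mult_ac)
lemma ip_cnj: "cnj (ip x y) = ip y (x::'v::finite vec)"
  unfolding ip_def by (simp add: cnj_sum mult.commute)

lemma qf_expand:
  "qf (A::'v::finite mat) (\<lambda>s. x s + c * y s) =
     qf A x + c * ip x (mv A y) + cnj c * ip y (mv A x) + cnj c * c * qf A y"
  unfolding qf_ip mv_add mv_scale ip_add1 ip_add2 ip_scale1 ip_scale2 by (simp add: algebra_simps)

lemma ip_evec1: "ip (evec s) y = (y::'v::finite vec) s"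
proof -
  have "(\<Sum>u\<in>UNIV. cnj (evec s u) * y u) = (\<Sum>u\<in>UNIV. if u = s then y s else 0)"
    by (rule sum.cong) (auto simp: evec_def)
  then show ?thesis unfolding ip_def by simp
qed

lemma qf_evec: "qf (A::'v::finite mat) (evec s) = A s s"
  unfolding qf_ip ip_evec1 mv_evec ..

lemma psd_diag: "psd (A::'v::finite mat) \<Longrightarrow> Im (A s s) = 0 \<and> 0 \<le> Re (A s s)"
  using qf_evec[of A s] unfolding psd_def by metis

lemma psd_herm: assumes "psd (A::'v::finite mat)" shows "A t s = cnj (A s t)"
proof -
  have d: "\<And>u. Im (A u u) = 0" using psd_diag[OF assms] by blast
  have q: "\<And>c. Im (qf A (\<lambda>u. evec s u + c * evec t u)) = 0" using assms unfolding psd_def by blast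
  have e: "\<And>c. qf A (\<lambda>u. evec s u + c * evec t u) = A s s + c * A s t + cnj c * A t s + cnj c * c * A t t"
    unfolding qf_expand qf_evec ip_evec1 mv_evec ..
  have c1: "Im (A s t + A t s) = 0" using q[of 1] d[of s] d[of t] unfolding e by simp
  have c2: "Re (A s t - A t s) = 0" using q[of \<i>] d[of s] d[of t] unfolding e by simp
  show ?thesis using c1 c2 by (simp add: complex_eq_iff)
qed

lemma psd_madj: assumes "psd (A::'v::finite mat)" shows "madj A = A"
proof (rule ext, rule ext)
  fix s t show "madj A s t = A s t" unfolding madj_def psd_herm[OF assms, of t s] by simp
qed
lemma psd_ip_herm: assumes "psd (A::'v::finite mat)" shows "ip y (mv A x) = cnj (ip x (mv A y))"
  using ip_adj[of x A y] psd_madj[OF assms] ip_cnj by metis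

lemma cs0: assumes A: "psd (A::'v::finite mat)" and y: "qf A y = 0" shows "mv A y = (\<lambda>s. 0)"
proof
  fix s
  let ?w = "mv A y s"
  have h: "ip (evec s) (mv A y) = ?w" by (rule ip_evec1)
  have h2: "ip y (mv A (evec s)) = cnj ?w" using psd_ip_herm[OF A, of y "evec s"] h by simp
  define a where "a = Re (A s s)"
  have a0: "0 \<le> a" using psd_diag[OF A] a_def by auto
  have Ass: "A s s = of_real a" using psd_diag[OF A, of s] a_def by (simp add: complex_eq_iff)
  define t :: real where "t = 1 / (a + 1)"
  have t0: "0 < t" using a0 t_def by simp
  have ta: "t * a < 1" unfolding t_def using a0 by (simp add: field_simps)
  define c where "c = - of_real t * ?w"
  have "qf A (\<lambda>u. y u + c * evec s u) = 0 + c * cnj ?w + cnj c * ?w + cnj c * c * of_real a"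
    by (simp only: qf_expand y qf_evec h h2 Ass)
  also have "\<dots> = of_real (- 2 * t + t * t * a) * (?w * cnj ?w)"
    unfolding c_def by (simp add: algebra_simps)
  also have "\<dots> = of_real ((- 2 * t + t * t * a) * (cmod ?w)^2)"
    unfolding complex_norm_square[symmetric] by simp
  finally have e: "Re (qf A (\<lambda>u. y u + c * evec s u)) = (- 2 * t + t * t * a) * (cmod ?w)^2" by simp
  have "0 \<le> Re (qf A (\<lambda>u. y u + c * evec s u))" using A unfolding psd_def by blast
  then have "0 \<le> (- 2 * t + t * t * a) * (cmod ?w)^2" using e by simp
  moreover have "- 2 * t + t * t * a < 0"
  proof -
    have "t * (t * a) < t * 2" using ta t0 by simp
    then show ?thesis by (simp add: algebra_simps)
  qed
  ultimately have "(cmod ?w)^2 \<le> 0" by (simp add: zero_le_mult_iff)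
  then show "?w = 0" by simp
qed

lemma mtrace_psd: "psd (A::'v::finite mat) \<Longrightarrow> Im (mtrace A) = 0 \<and> 0 \<le> Re (mtrace A)"
  unfolding mtrace_def using psd_diag[of A] by (auto simp: Im_sum Re_sum intro!: sum.neutral sum_nonneg)

lemma psd_trace0: assumes A: "psd (A::'v::finite mat)" and t: "Re (mtrace A) = 0" shows "A = mzero"
proof -
  have "\<forall>s\<in>UNIV. Re (A s s) = 0"
    using t unfolding mtrace_def by (subst (asm) Re_sum, subst (asm) sum_nonneg_eq_0_iff) (use psd_diag[OF A] in auto)
  then have d: "\<And>s. qf A (evec s) = 0" unfolding qf_evec using psd_diag[OF A] by (simp add: complex_eq_iff)
  show ?thesis
  proof (rule ext, rule ext)
    fix s t
    have "mv A (evec t) s = 0" using fun_cong[OF cs0[OF A d[of t]], of s] by simp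
    then show "A s t = mzero s t" by (simp add: mv_evec mzero_def)
  qed
qed

lemma offdiag_bound: assumes A: "psd (A::'v::finite mat)" shows "cmod (A s t) \<le> Re (mtrace A)"
proof -
  have d: "\<And>u. A u u = of_real (Re (A u u))" "\<And>u. 0 \<le> Re (A u u)"
    using psd_diag[OF A] by (auto simp: complex_eq_iff)
  have tr: "\<And>u. Re (A u u) \<le> Re (mtrace A)"
    unfolding mtrace_def Re_sum by (rule member_le_sum) (use d in auto)
  show ?thesis
  proof (cases "s = t \<or> A s t = 0")
    case True
    then show ?thesis
    proof
      assume st: "s = t"
      have "cmod (A s s) = Re (A s s)" by (subst d(1)) (simp add: d(2))
      then show ?thesis using st tr[of s] by simp
    next
      assume "A s t = 0" then show ?thesis using tr[of s] d(2)[of s] by simp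
    qed
  next
    case False
    then have st: "s \<noteq> t" and nz: "A s t \<noteq> 0" by auto
    define c where "c = - cnj (A s t) / of_real (cmod (A s t))"
    have cc: "cnj c * c = 1" unfolding c_def using nz
      by (simp add: field_simps complex_norm_square[symmetric] power2_eq_square)
    have ca: "c * A s t = - of_real (cmod (A s t))" unfolding c_def using nz
      by (simp add: field_simps complex_norm_square[symmetric] power2_eq_square mult.commute)
    have h: "A t s = cnj (A s t)" by (rule psd_herm[OF A])
    have "qf A (\<lambda>u. evec s u + c * evec t u) = A s s + c * A s t + cnj c * A t s + cnj c * c * A t t"
      unfolding qf_expand qf_evec ip_evec1 mv_evec ..
    also have "\<dots> = A s s + A t t - 2 * of_real (cmod (A s t))"
    proof -
      have "cnj c * A t s = cnj (c * A s t)" using h by simp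
      then show ?thesis using ca cc by simp
    qed
    finally have "0 \<le> Re (A s s) + Re (A t t) - 2 * cmod (A s t)"
      using A unfolding psd_def by (metis minus_complex.simps(1) plus_complex.simps(1) Re_complex_of_real
          mult_2 of_real_add)
    moreover have "Re (A s s) + Re (A t t) \<le> Re (mtrace A)"
    proof -
      have "Re (A s s) + Re (A t t) = (\<Sum>u\<in>{s,t}. Re (A u u))" using st by simp
      also have "\<dots> \<le> (\<Sum>u\<in>UNIV. Re (A u u))" by (rule sum_mono2) (use d in auto)
      finally show ?thesis unfolding mtrace_def Re_sum .
    qed
    moreover have "0 \<le> cmod (A s t)" by simp
    ultimately show ?thesis by linarith
  qed
qed

lemma qf_conj: "qf ((K::'v::finite mat) ** A ** madj K) x = qf A (mv (madj K) x)"
  unfolding qf_ip mv_mmult ip_adj[of x K] ..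

lemma psd_conj: "psd (A::'v::finite mat) \<Longrightarrow> psd (K ** A ** madj K)"
  unfolding psd_def qf_conj by blast

lemma qf_madd: "qf (madd (A::'v::finite mat) B) x = qf A x + qf B x"
  unfolding qf_def madd_def by (simp add: distrib_left distrib_right sum.distrib)

lemma psd_madd: "psd (A::'v::finite mat) \<Longrightarrow> psd B \<Longrightarrow> psd (madd A B)"
  unfolding psd_def qf_madd by simp

lemma psd_mzero: "psd (mzero::'v::finite mat)"
  unfolding psd_def qf_def mzero_def by simp

lemma qf_scale: "qf (\<lambda>s t. c * (A::'v::finite mat) s t) x = c * qf A x"
  unfolding qf_def by (simp add: sum_distrib_left mult_ac)

lemma psd_scale: "psd (A::'v::finite mat) \<Longrightarrow> 0 \<le> r \<Longrightarrow> psd (\<lambda>s t. complex_of_real r * A s t)"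
  unfolding psd_def qf_scale by simp

lemma qf_sum: "qf (\<lambda>s t. \<Sum>i\<in>I. (F i::'v::finite mat) s t) x = (\<Sum>i\<in>I. qf (F i) x)"
  unfolding qf_def by (simp add: sum_distrib_left sum_distrib_right sum.swap[of _ I] mult_ac)

lemma psd_sum: "(\<And>i. i \<in> I \<Longrightarrow> psd (F i::'v::finite mat)) \<Longrightarrow> psd (\<lambda>s t. \<Sum>i\<in>I. F i s t)"
  unfolding psd_def qf_sum by (simp add: Im_sum Re_sum sum_nonneg)

lemma kraus_eq: "kraus As \<rho> = (\<lambda>s t. \<Sum>A\<leftarrow>As. (A ** \<rho> ** madj A) s t)" by (simp add: kraus_def)

lemma kraus_Cons: "kraus (A # As) \<rho> = madd (A ** \<rho> ** madj A) (kraus As \<rho>)"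
  unfolding kraus_def madd_def by simp
lemma kraus_Nil: "kraus [] \<rho> = mzero" unfolding kraus_def mzero_def by simp

lemma psd_kraus: "psd (\<rho>::'v::finite mat) \<Longrightarrow> psd (kraus As \<rho>)"
  by (induction As) (auto simp: kraus_Cons kraus_Nil psd_mzero psd_madd psd_conj)

lemma mtrace_comm: "mtrace ((A::'v::finite mat) ** B) = mtrace (B ** A)"
  unfolding mtrace_def mmult_def by (subst sum.swap) (simp add: mult.commute)

lemma mtrace_madd: "mtrace (madd A B) = mtrace (A::'v::finite mat) + mtrace B"
  unfolding mtrace_def madd_def by (simp add: sum.distrib)
lemma mtrace_msub: "mtrace (msub A B) = mtrace (A::'v::finite mat) - mtrace B"
  unfolding mtrace_def msub_def by (simp add: sum_subtractf)
lemma mtrace_mzero[simp]: "mtrace (mzero::'v::finite mat) = 0"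
  unfolding mtrace_def mzero_def by simp
lemma mtrace_scale: "mtrace (\<lambda>s t. c * (A::'v::finite mat) s t) = c * mtrace A"
  unfolding mtrace_def by (simp add: sum_distrib_left)
lemma mtrace_sum: "mtrace (\<lambda>s t. \<Sum>i\<in>I. (F i::'v::finite mat) s t) = (\<Sum>i\<in>I. mtrace (F i))"
  unfolding mtrace_def by (rule sum.swap)

lemma mtrace_conj: "mtrace ((K::'v::finite mat) ** A ** madj K) = mtrace (madj K ** K ** A)"
  by (metis mmult_assoc mtrace_comm)

lemma proj_split_trace:
  assumes G: "is_proj UNIV (G::'v::finite mat)"
  shows "mtrace (G ** \<rho> ** G) + mtrace (msub (idW UNIV) G ** \<rho> ** msub (idW UNIV) G) = mtrace \<rho>"
proof -
  have h: "G ** G = G" "madj G = G" using G by (auto simp: is_proj_def)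
  let ?N = "msub (idW UNIV) G"
  have N1: "madj ?N = ?N" by (simp add: madj_msub h)
  have "?N ** ?N = msub (msub (idW UNIV) G) (msub G (G ** G))"
    by (simp add: mmult_msub_left mmult_msub_right)
  then have N2: "?N ** ?N = ?N" unfolding h by (auto simp: msub_def intro!: ext)
  note N = N1 N2
  have "mtrace (G ** \<rho> ** G) = mtrace (G ** \<rho>)"
    using mtrace_conj[of G \<rho>] h by (simp add: mmult_assoc mtrace_comm)
  moreover have "mtrace (?N ** \<rho> ** ?N) = mtrace (?N ** \<rho>)"
    using mtrace_conj[of ?N \<rho>] N by (simp add: mmult_assoc mtrace_comm)
  moreover have "mtrace (G ** \<rho>) + mtrace (?N ** \<rho>) = mtrace \<rho>"
    by (simp add: mmult_msub_left mtrace_msub)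
  ultimately show ?thesis by simp
qed

definition J :: "'v set \<Rightarrow> 'v st \<Rightarrow> 'v mat" where
  "J q e = (\<lambda>u s. if supp_in q s \<and> u = merge q s e then 1 else 0)"

definition blk :: "'v::finite set \<Rightarrow> 'v st \<Rightarrow> 'v mat \<Rightarrow> 'v mat" where
  "blk q e \<rho> = madj (J q e) ** \<rho> ** J q e"

lemma merge_eq_iff: "supp_in q s \<Longrightarrow> u = merge q s e \<longleftrightarrow> s = restr q u \<and> agree q u (merge q (restr q u) e)"
  unfolding merge_def restr_def supp_in_def agree_def by (auto simp: fun_eq_iff)

lemma agree_merge_iff: "agree q u (merge q t e) \<longleftrightarrow> (\<forall>x. x \<notin> q \<longrightarrow> u x = e x)"
  unfolding agree_def merge_def by auto

lemma merge_restr_iff: "u = merge q (restr q u) e \<longleftrightarrow> (\<forall>x. x \<notin> q \<longrightarrow> u x = e x)"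
  unfolding merge_def restr_def by (auto simp: fun_eq_iff)

lemma J_alt: "J q e u s = (if s = restr q u \<and> u = merge q (restr q u) e then 1 else 0)"
proof -
  have "(supp_in q s \<and> u = merge q s e) \<longleftrightarrow> (s = restr q u \<and> u = merge q (restr q u) e)"
  proof
    assume a: "supp_in q s \<and> u = merge q s e"
    then have "restr q u = s" using restr_merge by blast
    then show "s = restr q u \<and> u = merge q (restr q u) e" using a by simp
  next
    assume "s = restr q u \<and> u = merge q (restr q u) e"
    then show "supp_in q s \<and> u = merge q s e" using supp_in_restr by metis
  qed
  then show ?thesis unfolding J_def by simp
qed

lemma J_col: fixes f :: "'v::finite st \<Rightarrow> complex" shows "(\<Sum>s\<in>UNIV. J q e u s * f s) = (if u = merge q (restr q u) e then f (restr q u) else 0)"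
proof -
  have "(\<Sum>s\<in>UNIV. J q e u s * f s) = (\<Sum>s\<in>UNIV. if s = restr q u then (if u = merge q (restr q u) e then f (restr q u) else 0) else 0)"
    by (rule sum.cong) (auto simp: J_alt)
  then show ?thesis by simp
qed

lemma J_row: fixes f :: "'v::finite st \<Rightarrow> complex" shows "(\<Sum>v\<in>UNIV. f v * J q e v t) = (if supp_in q t then f (merge q t e) else 0)"
proof (cases "supp_in q t")
  case True
  have "(\<Sum>v\<in>UNIV. f v * J q e v t) = (\<Sum>v\<in>UNIV. if v = merge q t e then f (merge q t e) else 0)"
    by (rule sum.cong) (auto simp: J_def True)
  then show ?thesis using True by simp
next
  case False
  then show ?thesis by (simp add: J_def)
qed

lemma J_ext: assumes C: "on_reg q (C::'v::finite mat)"
  shows "ext q C ** J q e = J q e ** C"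
proof (rule ext, rule ext)
  fix u t
  have l: "(ext q C ** J q e) u t = (if supp_in q t then ext q C u (merge q t e) else 0)"
    unfolding mmult_def by (rule J_row)
  have r: "(J q e ** C) u t = (if u = merge q (restr q u) e then C (restr q u) t else 0)"
    unfolding mmult_def by (rule J_col)
  show "(ext q C ** J q e) u t = (J q e ** C) u t"
    unfolding l r ext_eq using C unfolding on_reg_def
    by (auto simp: restr_merge merge_restr_iff agree_merge_iff)
qed

lemma madj_J_ext: assumes C: "on_reg q (C::'v::finite mat)"
  shows "madj (J q e) ** ext q C = C ** madj (J q e)"
proof -
  have "ext q (madj C) ** J q e = J q e ** madj C" by (rule J_ext[OF on_reg_madj[OF C]])
  then have "madj (ext q (madj C) ** J q e) = madj (J q e ** madj C)" by simp
  then show ?thesis by (simp add: madj_mmult ext_madj)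
qed

lemma blk_conj: assumes C: "on_reg q (C::'v::finite mat)"
  shows "blk q e (ext q C ** \<rho> ** madj (ext q C)) = C ** blk q e \<rho> ** madj C"
proof -
  have a: "madj (ext q C) ** J q e = J q e ** madj C"
    using J_ext[OF on_reg_madj[OF C]] by (simp add: ext_madj)
  show ?thesis unfolding blk_def
    by (simp add: mmult_assoc a) (simp add: mmult_assoc[symmetric] madj_J_ext[OF C])
qed

lemma blk_madd: "blk q e (madd X Y) = madd (blk q e X) (blk q e Y)"
  unfolding blk_def by (simp add: mmult_madd_left mmult_madd_right)
lemma blk_mzero: "blk q e mzero = mzero" unfolding blk_def by simp

lemma blk_kraus: "(\<forall>A\<in>set As. on_reg q A) \<Longrightarrow> blk q e (kraus (map (ext q) As) \<rho>) = kraus As (blk q e \<rho>)"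
  by (induction As) (auto simp: kraus_Cons kraus_Nil blk_madd blk_mzero blk_conj)

lemma blk_models: assumes A: "on_reg q (A::'v::finite mat)" and r: "ext q A ** \<rho> = \<rho>"
  shows "A ** blk q e \<rho> = blk q e \<rho>"
proof -
  have a: "A ** madj (J q e) = madj (J q e) ** ext q A" by (rule madj_J_ext[OF A, symmetric])
  have "A ** (madj (J q e) ** \<rho> ** J q e) = ((A ** madj (J q e)) ** \<rho>) ** J q e" by (simp add: mmult_assoc)
  also have "\<dots> = madj (J q e) ** (ext q A ** \<rho>) ** J q e" unfolding a by (simp add: mmult_assoc)
  finally show ?thesis unfolding blk_def r .
qed

lemma on_reg_blk: "on_reg q (blk q e \<rho>)"
proof -
  have "\<And>s t. \<not> supp_in q s \<Longrightarrow> blk q e \<rho> s t = 0"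
    unfolding blk_def mmult_def madj_def J_def by simp
  moreover have "\<And>s t. \<not> supp_in q t \<Longrightarrow> blk q e \<rho> s t = 0"
    unfolding blk_def mmult_def J_def by simp
  ultimately show ?thesis unfolding on_reg_def by blast
qed

lemma psd_blk: "psd \<rho> \<Longrightarrow> psd (blk q e \<rho>)"
  unfolding blk_def using psd_conj[of \<rho> "madj (J q e)"] by simp

definition Es :: "'v set \<Rightarrow> 'v st set" where "Es q = {e. supp_in (- q) e}"

lemma JJ_sum: "(\<lambda>u v. \<Sum>e\<in>Es q. (J q e ** madj (J q e)) u v) = idW (UNIV::'v::finite set)"
proof (rule ext, rule ext)
  fix u v :: "'v st"
  have "\<And>e. (J q e ** madj (J q e)) u v = (if u = merge q (restr q u) e then (if v = merge q (restr q u) e then 1 else 0) else 0)"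
    unfolding mmult_def madj_def by (subst J_col) (simp add: J_def supp_in_restr)
  then have "(\<Sum>e\<in>Es q. (J q e ** madj (J q e)) u v) =
       (\<Sum>e\<in>Es q. if e = restr (- q) u then (if u = v then 1 else 0) else 0)"
    by (intro sum.cong) (auto simp: Es_def merge_def restr_def supp_in_def fun_eq_iff)
  also have "\<dots> = (if u = v then 1 else 0)"
    using supp_in_restr[of "- q" u] by (simp add: Es_def)
  finally show "(\<Sum>e\<in>Es q. (J q e ** madj (J q e)) u v) = idW UNIV u v" by (simp add: idW_def)
qed

lemma sum_mmult: "(\<lambda>u v. \<Sum>e\<in>I. (F e::'v::finite mat) u v) ** X = (\<lambda>u v. \<Sum>e\<in>I. (F e ** X) u v)"
  unfolding mmult_def by (simp add: sum_distrib_right) (rule ext, rule ext, rule sum.swap)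

lemma trace_blk: "mtrace (\<rho>::'v::finite mat) = (\<Sum>e\<in>Es q. mtrace (blk q e \<rho>))"
proof -
  have "\<And>e. mtrace (blk q e \<rho>) = mtrace ((J q e ** madj (J q e)) ** \<rho>)"
    unfolding blk_def by (metis mmult_assoc mtrace_comm)
  then have "(\<Sum>e\<in>Es q. mtrace (blk q e \<rho>)) = mtrace (\<lambda>u v. \<Sum>e\<in>Es q. ((J q e ** madj (J q e)) ** \<rho>) u v)"
    by (simp add: mtrace_sum)
  also have "\<dots> = mtrace \<rho>" unfolding sum_mmult[symmetric] JJ_sum by simp
  finally show ?thesis by simp
qed

lemma finite_Es: "finite (Es (q::'v::finite set))" by simp

lemma trace_blk_le: assumes "psd (\<rho>::'v::finite mat)" and True: "e \<in> Es q"
  shows "Re (mtrace (blk q e \<rho>)) \<le> Re (mtrace \<rho>)"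
proof -
  have "Re (mtrace \<rho>) = (\<Sum>e\<in>Es q. Re (mtrace (blk q e \<rho>)))" by (subst trace_blk[of _ q]) (simp add: Re_sum)
  moreover have "Re (mtrace (blk q e \<rho>)) \<le> (\<Sum>e\<in>Es q. Re (mtrace (blk q e \<rho>)))"
    by (rule member_le_sum[OF True]) (use mtrace_psd psd_blk assms in auto)
  ultimately show ?thesis by simp
qed

lemma kraus_mzero: "kraus As mzero = mzero"
  by (induction As) (simp_all add: kraus_Cons kraus_Nil, simp add: madd_def mzero_def)

lemma loop_iter_mzero: "(\<And>k. Fs k mzero = mzero) \<Longrightarrow> loop_iter P Fs k mzero = mzero"
  by (induction k) auto

lemma den_mzero: "E \<in> den S \<Longrightarrow> E mzero = (mzero::'v::finite mat)"
proof (induction S arbitrary: E)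
  case (While P q S)
  then obtain Fs where E: "E = (\<lambda>\<rho>. (\<lambda>s t. \<Sum>k. (ext q (pcomp q P) ** loop_iter (ext q P) Fs k \<rho>
        ** ext q (pcomp q P)) s t))" and Fs: "\<forall>k. Fs k \<in> den S" by auto
  have "\<And>k. loop_iter (ext q P) Fs k mzero = mzero" by (rule loop_iter_mzero) (use While Fs in auto)
  then show ?case unfolding E by simp (simp add: mzero_def)
next
  case (Init q) then show ?case by simp (simp add: mzero_def)
next
  case (PChoice S0 p S1) then show ?case by auto (simp add: mzero_def)
next
  case (If P q S1 S0) then show ?case by auto (simp add: mzero_def madd_def)
qed (auto simp: kraus_mzero)

definition tnp :: "'v::finite sop \<Rightarrow> bool" where
  "tnp E \<longleftrightarrow> (\<forall>\<rho>. psd \<rho> \<longrightarrow> psd (E \<rho>) \<and> Re (mtrace (E \<rho>)) \<le> Re (mtrace \<rho>))"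

lemma mmult_suminf:
  assumes "\<And>s t. summable (\<lambda>k. (M k::'v::finite mat) s t)"
  shows "X ** (\<lambda>s t. \<Sum>k. M k s t) = (\<lambda>s t. \<Sum>k. (X ** M k) s t)"
proof (rule ext, rule ext)
  fix s t
  have "(X ** (\<lambda>s t. \<Sum>k. M k s t)) s t = (\<Sum>u\<in>UNIV. \<Sum>k. X s u * M k u t)"
    unfolding mmult_def using assms by (simp add: suminf_mult)
  also have "\<dots> = (\<Sum>k. \<Sum>u\<in>UNIV. X s u * M k u t)"
    by (rule suminf_sum[symmetric]) (use assms summable_mult in blast)
  finally show "(X ** (\<lambda>s t. \<Sum>k. M k s t)) s t = (\<Sum>k. (X ** M k) s t)" by (simp add: mmult_def)
qed

lemma qf_suminf:
  assumes "\<And>s t. summable (\<lambda>k. (M k::'v::finite mat) s t)"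
  shows "summable (\<lambda>k. qf (M k) x) \<and> qf (\<lambda>s t. \<Sum>k. M k s t) x = (\<Sum>k. qf (M k) x)"
proof -
  have sm: "\<And>s t. summable (\<lambda>k. cnj (x s) * M k s t * x t)"
    using summable_mult2[OF summable_mult[OF assms]] by (simp add: mult.assoc)
  have sm2: "\<And>s. summable (\<lambda>k. \<Sum>t\<in>UNIV. cnj (x s) * M k s t * x t)"
    by (rule summable_sum) (use sm in blast)
  have tw: "\<And>s t. cnj (x s) * (\<Sum>k. M k s t) * x t = (\<Sum>k. cnj (x s) * M k s t * x t)"
    using suminf_mult2[OF summable_mult[OF assms]] suminf_mult[OF assms] by simp
  have "qf (\<lambda>s t. \<Sum>k. M k s t) x = (\<Sum>s\<in>UNIV. \<Sum>t\<in>UNIV. \<Sum>k. cnj (x s) * M k s t * x t)"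
    unfolding qf_def tw ..
  also have "\<dots> = (\<Sum>s\<in>UNIV. \<Sum>k. \<Sum>t\<in>UNIV. cnj (x s) * M k s t * x t)"
    by (rule sum.cong[OF HOL.refl], rule suminf_sum[symmetric]) (use sm in blast)
  also have "\<dots> = (\<Sum>k. \<Sum>s\<in>UNIV. \<Sum>t\<in>UNIV. cnj (x s) * M k s t * x t)"
    by (rule suminf_sum[symmetric]) (use sm2 in blast)
  finally show ?thesis unfolding qf_def using summable_sum[of UNIV, OF sm2] by simp
qed

lemma trace_suminf:
  assumes "\<And>s t. summable (\<lambda>k. (M k::'v::finite mat) s t)"
  shows "summable (\<lambda>k. mtrace (M k)) \<and> mtrace (\<lambda>s t. \<Sum>k. M k s t) = (\<Sum>k. mtrace (M k))"
  unfolding mtrace_def using suminf_sum[of UNIV "\<lambda>s k. M k s s"] summable_sum[of UNIV "\<lambda>s k. M k s s"] assms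
  by auto

lemma psd_suminf:
  assumes "\<And>s t. summable (\<lambda>k. (M k::'v::finite mat) s t)" "\<And>k. psd (M k)"
  shows "psd (\<lambda>s t. \<Sum>k. M k s t)"
  unfolding psd_def
proof
  fix x
  note q = qf_suminf[where M=M and x=x, OF assms(1)]
  have "Im (qf (\<lambda>s t. \<Sum>k. M k s t) x) = (\<Sum>k. Im (qf (M k) x))"
    using q Im_suminf by auto
  also have "\<dots> = 0" using assms(2) unfolding psd_def by simp
  finally have a: "Im (qf (\<lambda>s t. \<Sum>k. M k s t) x) = 0" .
  have "Re (qf (\<lambda>s t. \<Sum>k. M k s t) x) = (\<Sum>k. Re (qf (M k) x))"
    using q Re_suminf by auto
  also have "0 \<le> \<dots>" by (rule suminf_nonneg) (use q summable_Re assms(2) in \<open>auto simp: psd_def\<close>)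
  finally show "Im (qf (\<lambda>s t. \<Sum>k. M k s t) x) = 0 \<and> 0 \<le> Re (qf (\<lambda>s t. \<Sum>k. M k s t) x)"
    using a by simp
qed

lemma while_core:
  assumes G: "is_proj UNIV (G::'v::finite mat)"
    and Fs: "\<And>k. tnp (Fs k)" and r: "psd \<rho>"
  defines "Gc \<equiv> msub (idW UNIV) G"
  defines "M \<equiv> (\<lambda>k. Gc ** loop_iter G Fs k \<rho> ** Gc)"
  shows "\<And>k. psd (loop_iter G Fs k \<rho>) \<and> Re (mtrace (loop_iter G Fs k \<rho>)) \<le> Re (mtrace \<rho>)"
    and "\<And>s t. summable (\<lambda>k. M k s t)"
    and "psd (\<lambda>s t. \<Sum>k. M k s t)"
    and "Re (mtrace (\<lambda>s t. \<Sum>k. M k s t)) \<le> Re (mtrace \<rho>)"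
proof -
  have Gh: "G ** G = G" "madj G = G" using G by (auto simp: is_proj_def)
  have Gch: "madj Gc = Gc" unfolding Gc_def by (simp add: madj_msub Gh)
  define c where "c = (\<lambda>k. Re (mtrace (M k)))"
  define T where "T = (\<lambda>k. Re (mtrace (loop_iter G Fs k \<rho>)))"
  have it_psd: "\<And>k. psd (loop_iter G Fs k \<rho>)"
  proof -
    fix k show "psd (loop_iter G Fs k \<rho>)"
    proof (induction k)
      case 0 then show ?case using r by simp
    next
      case (Suc k)
      have "psd (G ** loop_iter G Fs k \<rho> ** G)" using psd_conj[OF Suc, of G] Gh by simp
      then show ?case using Fs[of k] unfolding tnp_def by simp
    qed
  qed
  have Mpsd: "\<And>k. psd (M k)" unfolding M_def using psd_conj[OF it_psd, of Gc] Gch by simp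
  have c0: "\<And>k. 0 \<le> c k" unfolding c_def using mtrace_psd Mpsd by blast
  have T0: "\<And>k. 0 \<le> T k" unfolding T_def using mtrace_psd it_psd by blast
  have step: "\<And>k. T (Suc k) + c k \<le> T k"
  proof -
    fix k
    have "T (Suc k) \<le> Re (mtrace (G ** loop_iter G Fs k \<rho> ** G))"
      unfolding T_def using Fs[of k] psd_conj[OF it_psd, of G] Gh unfolding tnp_def by simp
    moreover have "Re (mtrace (G ** loop_iter G Fs k \<rho> ** G)) + c k = T k"
      unfolding c_def M_def T_def Gc_def using arg_cong[OF proj_split_trace[OF G, of "loop_iter G Fs k \<rho>"], of Re]
      by (simp only: plus_complex.sel)
    ultimately show "T (Suc k) + c k \<le> T k" by simp
  qed
  have part: "\<And>n. (\<Sum>k<n. c k) + T n \<le> T 0"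
  proof -
    fix n show "(\<Sum>k<n. c k) + T n \<le> T 0"
    proof (induction n)
      case (Suc n) then show ?case using step[of n] by simp
    qed simp
  qed
  have part2: "\<And>n. (\<Sum>k<n. c k) \<le> T 0"
  proof -
    fix n show "(\<Sum>k<n. c k) \<le> T 0" using part[of n] T0[of n] by linarith
  qed
  have sc: "summable c" by (rule summableI_nonneg_bounded[OF c0 part2])
  have Ttr: "T k \<le> Re (mtrace \<rho>)" for k
  proof (induction k)
    case 0 then show ?case by (simp add: T_def)
  next
    case (Suc k) then show ?case using step[of k] c0[of k] by simp
  qed
  show "\<And>k. psd (loop_iter G Fs k \<rho>) \<and> Re (mtrace (loop_iter G Fs k \<rho>)) \<le> Re (mtrace \<rho>)"
    using it_psd Ttr unfolding T_def by blast
  show sm: "\<And>s t. summable (\<lambda>k. M k s t)"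
  proof -
    fix s t
    have "\<forall>n\<ge>0. norm (M n s t) \<le> c n" unfolding c_def using offdiag_bound[OF Mpsd] by blast
    then show "summable (\<lambda>k. M k s t)"
      by (rule summable_comparison_test[OF exI sc])
  qed
  show "psd (\<lambda>s t. \<Sum>k. M k s t)" by (rule psd_suminf[OF sm Mpsd])
  have "Re (mtrace (\<lambda>s t. \<Sum>k. M k s t)) = (\<Sum>k. c k)"
    using trace_suminf[where M=M, OF sm] Re_suminf unfolding c_def by auto
  also have "\<dots> \<le> T 0" by (rule suminf_le_const[OF sc part2])
  finally show "Re (mtrace (\<lambda>s t. \<Sum>k. M k s t)) \<le> Re (mtrace \<rho>)" by (simp add: T_def)
qed

lemma ext_sum: "ext q (\<lambda>s t. \<Sum>i\<in>I. F i s t) = (\<lambda>s t. \<Sum>i\<in>I. ext q (F i) s t)"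
  by (auto intro!: ext simp: ext_eq)

lemma madj_ketbra: "madj (ketbra u v) = ketbra v u"
  unfolding madj_def ketbra_def by (auto intro!: ext)

lemma ketbra_mult: "ketbra (i::'v::finite st) u ** ketbra u j = ketbra i j"
proof (rule ext, rule ext)
  fix s t
  have "(\<Sum>w\<in>UNIV. ketbra i u s w * ketbra u j w t) = (\<Sum>w\<in>UNIV. if w = u then ketbra i j s t else 0)"
    by (rule sum.cong) (auto simp: ketbra_def)
  then show "(ketbra i u ** ketbra u j) s t = ketbra i j s t" unfolding mmult_def by simp
qed

lemma on_reg_ketbra: "supp_in q u \<Longrightarrow> supp_in q v \<Longrightarrow> on_reg q (ketbra u v)"
  unfolding on_reg_def ketbra_def by auto

lemma supp_in_zero: "supp_in q zero_st" unfolding supp_in_def zero_st_def by simp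

lemma sum_ketbra: "(\<lambda>s t. \<Sum>i\<in>{i. supp_in q i}. ketbra i i s t) = idW (q::'v::finite set)"
proof (rule ext, rule ext)
  fix s t :: "'v st"
  have "(\<Sum>i\<in>{i. supp_in q i}. ketbra i i s t) = (\<Sum>i\<in>{i. supp_in q i}. if i = s then (if s = t then 1 else 0) else 0)"
    by (rule sum.cong) (auto simp: ketbra_def)
  then show "(\<Sum>i\<in>{i. supp_in q i}. ketbra i i s t) = idW q s t" by (simp add: idW_def)
qed

lemma init_kraus_sum:
  "(\<lambda>s t. \<Sum>i\<in>{i. supp_in q i}. (madj (ext q (ketbra zero_st i)) ** ext q (ketbra zero_st i)) s t) = idW (UNIV::'v::finite set)"
proof -
  have "\<And>i. supp_in q i \<Longrightarrow> madj (ext q (ketbra zero_st i)) ** ext q (ketbra zero_st i) = ext q (ketbra i i)"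
    by (simp add: ext_madj[symmetric] ext_mmult[symmetric] on_reg_ketbra supp_in_zero madj_ketbra ketbra_mult)
  then have "(\<lambda>s t. \<Sum>i\<in>{i. supp_in q i}. (madj (ext q (ketbra zero_st i)) ** ext q (ketbra zero_st i)) s t)
      = (\<lambda>s t. \<Sum>i\<in>{i. supp_in q i}. ext q (ketbra i i) s t)" by (auto intro!: ext sum.cong)
  also have "\<dots> = ext q (idW q)" unfolding ext_sum[symmetric] sum_ketbra ..
  finally show ?thesis by (simp add: ext_idW)
qed

lemma on_reg_kraus: "(\<forall>A\<in>set As. on_reg q A) \<Longrightarrow> on_reg q X \<Longrightarrow> on_reg q (kraus As (X::'v::finite mat))"
  by (induction As) (auto simp: kraus_Cons kraus_Nil on_reg_madd on_reg_mmult on_reg_madj)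

lemma tnp_conj_unitary: assumes "madj K ** K = idW UNIV" shows "tnp (\<lambda>\<rho>. (K::'v::finite mat) ** \<rho> ** madj K)"
  unfolding tnp_def by (auto simp: mtrace_conj assms psd_conj)

lemma tnp_proj: assumes G: "is_proj UNIV (G::'v::finite mat)" shows "tnp (\<lambda>\<rho>. G ** \<rho> ** G)"
  unfolding tnp_def
proof (intro allI impI)
  fix \<rho> :: "'v mat" assume r: "psd \<rho>"
  have h: "madj G = G" using G by (simp add: is_proj_def)
  have "psd (G ** \<rho> ** G)" using psd_conj[OF r, of G] h by simp
  moreover have "Re (mtrace (G ** \<rho> ** G)) \<le> Re (mtrace \<rho>)"
  proof -
    let ?N = "msub (idW UNIV) G"
    have "madj ?N = ?N" by (simp add: madj_msub h)
    then have "psd (?N ** \<rho> ** ?N)" using psd_conj[OF r, of ?N] by simp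
    then have "0 \<le> Re (mtrace (?N ** \<rho> ** ?N))" using mtrace_psd by blast
    moreover have "Re (mtrace (G ** \<rho> ** G)) + Re (mtrace (?N ** \<rho> ** ?N)) = Re (mtrace \<rho>)"
      using arg_cong[OF proj_split_trace[OF G, of \<rho>], of Re] by (simp only: plus_complex.sel)
    ultimately show ?thesis by linarith
  qed
  ultimately show "psd (G ** \<rho> ** G) \<and> Re (mtrace (G ** \<rho> ** G)) \<le> Re (mtrace \<rho>)" by blast
qed

lemma tnp_spec: assumes "As \<in> spec_kraus q P Q" shows "tnp (kraus (map (ext q) As))"
  unfolding tnp_def
proof (intro allI impI conjI)
  fix \<rho> :: "'a mat" assume r: "psd \<rho>"
  show "psd (kraus (map (ext q) As) \<rho>)" by (rule psd_kraus[OF r])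
  have A: "\<forall>A\<in>set As. on_reg q A" "tni q (kraus As)" using assms by (auto simp: spec_kraus_def)
  have "Re (mtrace (kraus (map (ext q) As) \<rho>)) = (\<Sum>e\<in>Es q. Re (mtrace (kraus As (blk q e \<rho>))))"
    by (subst trace_blk[of _ q]) (simp add: Re_sum blk_kraus[OF A(1)])
  also have "\<dots> \<le> (\<Sum>e\<in>Es q. Re (mtrace (blk q e \<rho>)))"
    by (rule sum_mono) (simp add: A(2)[unfolded tni_def, rule_format] on_reg_blk psd_blk[OF r])
  also have "\<dots> = Re (mtrace \<rho>)" by (subst trace_blk[of _ q]) (simp add: Re_sum)
  finally show "Re (mtrace (kraus (map (ext q) As) \<rho>)) \<le> Re (mtrace \<rho>)" .
qed

lemma den_tnp: "wf S \<Longrightarrow> E \<in> den S \<Longrightarrow> tnp (E::'v::finite sop)"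
proof (induction S arbitrary: E)
  case Skip then show ?case by (simp add: tnp_def)
next
  case Abort then show ?case using mtrace_psd by (auto simp: tnp_def psd_mzero)
next
  case (Init q)
  then have E: "E = (\<lambda>\<rho>. (\<lambda>s t. \<Sum>i\<in>{i. supp_in q i}.
        (ext q (ketbra zero_st i) ** \<rho> ** madj (ext q (ketbra zero_st i))) s t))" by simp
  show ?case unfolding tnp_def E
  proof (intro allI impI conjI)
    fix \<rho> :: "'v mat" assume r: "psd \<rho>"
    show "psd (\<lambda>s t. \<Sum>i\<in>{i. supp_in q i}. (ext q (ketbra zero_st i) ** \<rho> ** madj (ext q (ketbra zero_st i))) s t)"
      by (rule psd_sum) (rule psd_conj[OF r])
    have "mtrace (\<lambda>s t. \<Sum>i\<in>{i. supp_in q i}. (ext q (ketbra zero_st i) ** \<rho> ** madj (ext q (ketbra zero_st i))) s t)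
       = (\<Sum>i\<in>{i. supp_in q i}. mtrace ((madj (ext q (ketbra zero_st i)) ** ext q (ketbra zero_st i)) ** \<rho>))"
      by (simp add: mtrace_sum mtrace_conj)
    also have "\<dots> = mtrace ((\<lambda>s t. \<Sum>i\<in>{i. supp_in q i}. (madj (ext q (ketbra zero_st i)) ** ext q (ketbra zero_st i)) s t) ** \<rho>)"
      by (simp add: sum_mmult mtrace_sum)
    also have "\<dots> = mtrace \<rho>" by (simp add: init_kraus_sum)
    finally show "Re (mtrace (\<lambda>s t. \<Sum>i\<in>{i. supp_in q i}. (ext q (ketbra zero_st i) ** \<rho> ** madj (ext q (ketbra zero_st i))) s t)) \<le> Re (mtrace \<rho>)"
      by simp
  qed
next
  case (Apply q U)
  then have U: "on_reg q U" "madj U ** U = idW q" by (auto simp: is_unitary_def)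
  have "madj (ext q U) ** ext q U = idW UNIV"
    by (simp add: ext_madj[symmetric] ext_mmult[symmetric] on_reg_madj[OF U(1)] U(2) ext_idW)
  then show ?case using Apply tnp_conj_unitary by auto
next
  case (Assert P q)
  then show ?case using tnp_proj[OF is_proj_ext] by auto
next
  case (Spec P Q q)
  then show ?case using tnp_spec by auto
next
  case (PChoice S0 p S1)
  then obtain E0 E1 where E: "E = (\<lambda>\<rho>. (\<lambda>s t. complex_of_real p * E0 \<rho> s t + complex_of_real (1 - p) * E1 \<rho> s t))"
    and t: "tnp E0" "tnp E1" and p: "0 \<le> p" "p \<le> 1" by auto
  show ?case unfolding tnp_def
  proof (intro allI impI conjI)
    fix \<rho> :: "'v mat" assume r: "psd \<rho>"
    have e: "E \<rho> = madd (\<lambda>s t. complex_of_real p * E0 \<rho> s t) (\<lambda>s t. complex_of_real (1 - p) * E1 \<rho> s t)"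
      unfolding E madd_def by simp
    have t0: "psd (E0 \<rho>)" "Re (mtrace (E0 \<rho>)) \<le> Re (mtrace \<rho>)" using t(1) r by (auto simp: tnp_def)
    have t1: "psd (E1 \<rho>)" "Re (mtrace (E1 \<rho>)) \<le> Re (mtrace \<rho>)" using t(2) r by (auto simp: tnp_def)
    show "psd (E \<rho>)" unfolding e using p by (intro psd_madd psd_scale t0 t1) auto
    have "Re (mtrace (E \<rho>)) = p * Re (mtrace (E0 \<rho>)) + (1 - p) * Re (mtrace (E1 \<rho>))"
      unfolding e mtrace_madd mtrace_scale by simp
    also have "\<dots> \<le> p * Re (mtrace \<rho>) + (1 - p) * Re (mtrace \<rho>)"
      by (intro add_mono mult_left_mono t0 t1) (use p in auto)
    finally show "Re (mtrace (E \<rho>)) \<le> Re (mtrace \<rho>)" by (simp add: algebra_simps)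
  qed
next
  case (Seq S0 S1)
  then obtain E0 E1 where E: "E = E1 \<circ> E0" and t: "tnp E0" "tnp E1" by auto
  then show ?case unfolding tnp_def by (auto intro: order_trans)
next
  case (If P q S1 S0)
  then obtain E1 E0 where E: "E = (\<lambda>\<rho>. madd (E1 (ext q P ** \<rho> ** ext q P))
        (E0 (ext q (pcomp q P) ** \<rho> ** ext q (pcomp q P))))" and t: "tnp E1" "tnp E0"
    and P: "is_proj q P" by auto
  have G: "is_proj UNIV (ext q P)" by (rule is_proj_ext[OF P])
  have Gc: "is_proj UNIV (ext q (pcomp q P))" by (rule is_proj_ext[OF is_proj_pcomp[OF P]])
  show ?case unfolding tnp_def
  proof (intro allI impI conjI)
    fix \<rho> :: "'v mat" assume r: "psd \<rho>"
    have a: "psd (ext q P ** \<rho> ** ext q P)" "psd (ext q (pcomp q P) ** \<rho> ** ext q (pcomp q P))"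
      using tnp_proj[OF G] tnp_proj[OF Gc] r by (auto simp: tnp_def)
    show "psd (E \<rho>)" unfolding E using a t by (auto simp: tnp_def intro!: psd_madd)
    have "Re (mtrace (E \<rho>)) \<le> Re (mtrace (ext q P ** \<rho> ** ext q P)) + Re (mtrace (ext q (pcomp q P) ** \<rho> ** ext q (pcomp q P)))"
      unfolding E mtrace_madd using a t by (auto simp: tnp_def intro!: add_mono)
    also have "\<dots> = Re (mtrace \<rho>)"
      using arg_cong[OF proj_split_trace[OF G, of \<rho>], of Re] unfolding ext_pcomp by (simp only: plus_complex.sel)
    finally show "Re (mtrace (E \<rho>)) \<le> Re (mtrace \<rho>)" .
  qed
next
  case (While P q S)
  then obtain Fs where E: "E = (\<lambda>\<rho>. (\<lambda>s t. \<Sum>k. (ext q (pcomp q P) ** loop_iter (ext q P) Fs k \<rho>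
        ** ext q (pcomp q P)) s t))" and t: "\<And>k. tnp (Fs k)" and P: "is_proj q P" by auto
  have G: "is_proj UNIV (ext q P)" by (rule is_proj_ext[OF P])
  show ?case unfolding tnp_def E ext_pcomp
    apply (intro allI impI conjI)
     apply (erule while_core(3)[OF G t])
    apply (erule while_core(4)[OF G t])
    done
qed

lemma spec_sound:
  assumes As: "As \<in> spec_kraus q X Y" and A: "is_proj q A" and B: "is_proj q B"
    and AX: "ran A \<subseteq> ran X" and YB: "ran Y \<subseteq> ran B"
    and r: "psd (\<rho>::'v::finite mat)" "Re (mtrace \<rho>) \<le> 1" and rA: "ext q A ** \<rho> = \<rho>"
  shows "ext q B ** kraus (map (ext q) As) \<rho> = kraus (map (ext q) As) \<rho>"
proof -
  have As1: "\<forall>A\<in>set As. on_reg q A"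
    and As2: "\<And>\<sigma>. pdo q \<sigma> \<Longrightarrow> models \<sigma> X \<Longrightarrow> models (kraus As \<sigma>) Y"
    using As by (auto simp: spec_kraus_def)
  define Out where "Out = kraus (map (ext q) As) \<rho>"
  have Opsd: "psd Out" unfolding Out_def by (rule psd_kraus[OF r(1)])
  define N where "N = ext q (pcomp q B)"
  have Nproj: "is_proj UNIV N" unfolding N_def by (rule is_proj_ext[OF is_proj_pcomp[OF B]])
  have Nadj: "madj N = N" using Nproj by (simp add: is_proj_def)
  have Beq: "B ** B = B" using B by (simp add: is_proj_def)
  define Z where "Z = N ** Out ** madj N"
  have Zpsd: "psd Z" unfolding Z_def by (rule psd_conj[OF Opsd])
  have blkZ: "blk q e Z = mzero" if e: "e \<in> Es q" for e
  proof -
    have Con: "on_reg q (pcomp q B)" using is_proj_pcomp[OF B] by (simp add: is_proj_def)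
    have "blk q e Z = pcomp q B ** blk q e Out ** madj (pcomp q B)"
      unfolding Z_def N_def by (rule blk_conj[OF Con])
    also have "blk q e Out = kraus As (blk q e \<rho>)" unfolding Out_def by (rule blk_kraus[OF As1])
    finally have z: "blk q e Z = pcomp q B ** kraus As (blk q e \<rho>) ** madj (pcomp q B)" .
    have pdo: "pdo q (blk q e \<rho>)" unfolding pdo_def
      using on_reg_blk psd_blk[OF r(1)] trace_blk_le[OF r(1) e] r(2) by auto
    have "ran (blk q e \<rho>) \<subseteq> ran A"
      using blk_models[OF is_projD(1)[OF A] rA, of e] ran_mmult_sub by metis
    then have "models (blk q e \<rho>) X" using AX by (auto simp: models_def)
    then have "models (kraus As (blk q e \<rho>)) Y" using As2 pdo by blast
    then have "ran (kraus As (blk q e \<rho>)) \<subseteq> ran B" using YB by (auto simp: models_def)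
    then have K: "B ** kraus As (blk q e \<rho>) = kraus As (blk q e \<rho>)" using ran_sub_iff[OF Beq] by blast
    have Kon: "on_reg q (kraus As (blk q e \<rho>))" by (rule on_reg_kraus[OF As1 on_reg_blk])
    have "pcomp q B ** kraus As (blk q e \<rho>) = mzero"
      unfolding pcomp_def mmult_msub_left idW_left[OF Kon] K by (simp add: msub_def mzero_def)
    then show ?thesis unfolding z by simp
  qed
  have "Re (mtrace Z) = 0"
    by (subst trace_blk[of _ q]) (simp add: blkZ)
  then have Z0: "Z = mzero" by (rule psd_trace0[OF Zpsd])
  have ON: "Out ** N = mzero"
  proof (rule ext, rule ext)
    fix s t
    have "qf Out (mv (madj N) (evec t)) = qf Z (evec t)" unfolding Z_def qf_conj ..
    also have "\<dots> = 0" unfolding Z0 by (simp add: qf_def mzero_def)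
    finally have "mv Out (mv N (evec t)) = (\<lambda>s. 0)" using cs0[OF Opsd] Nadj by simp
    then have "mv (Out ** N) (evec t) s = 0" by (simp add: mv_mmult)
    then show "(Out ** N) s t = mzero s t" by (simp add: mv_evec mzero_def)
  qed
  have "N ** Out = madj (Out ** N)" using psd_madj[OF Opsd] Nadj by (simp add: madj_mmult)
  then have "N ** Out = mzero" using ON by simp
  then have "msub Out (ext q B ** Out) = mzero"
    unfolding N_def ext_pcomp mmult_msub_left by simp
  then show ?thesis unfolding Out_def[symmetric] by (auto simp: msub_def mzero_def fun_eq_iff)
qed

fun atomic :: "'v prog \<Rightarrow> bool" where
  "atomic Skip = True"
| "atomic Abort = True"
| "atomic (Init _) = True"
| "atomic (Apply _ _) = True"
| "atomic (Assert _ _) = True"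
| "atomic _ = False"

inductive cert :: "'v::finite set \<Rightarrow> 'v mat \<Rightarrow> 'v prog \<Rightarrow> 'v mat \<Rightarrow> bool" for q where
  ct_top: "is_proj q A \<Longrightarrow> cert q A S (idW q)"
| ct_bot: "is_proj q B \<Longrightarrow> cert q mzero S B"
| ct_spec: "is_proj q A \<Longrightarrow> is_proj q B \<Longrightarrow> ran A \<subseteq> ran X \<Longrightarrow> ran Y \<subseteq> ran B \<Longrightarrow> cert q A (Spec X Y q) B"
| ct_atom: "is_proj q A \<Longrightarrow> is_proj q B \<Longrightarrow> atomic S \<Longrightarrow> hoare (ext q A) S (ext q B) \<Longrightarrow> cert q A S B"
| ct_seq: "cert q A S0 R \<Longrightarrow> cert q R S1 B \<Longrightarrow> cert q A (Seq S0 S1) B"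
| ct_pch: "cert q A S0 B \<Longrightarrow> cert q A S1 B \<Longrightarrow> cert q A (PChoice S0 p S1) B"
| ct_if: "cert q A1 S1 B \<Longrightarrow> cert q A0 S0 B \<Longrightarrow> is_proj q A \<Longrightarrow> is_proj q G \<Longrightarrow>
    ran (G ** A) \<subseteq> ran A1 \<Longrightarrow> ran (pcomp q G ** A) \<subseteq> ran A0 \<Longrightarrow> cert q A (If G q S1 S0) B"
| ct_while: "cert q A1 S I \<Longrightarrow> is_proj q I \<Longrightarrow> is_proj q A \<Longrightarrow> is_proj q B \<Longrightarrow> is_proj q G \<Longrightarrow>
    ran (G ** I) \<subseteq> ran A1 \<Longrightarrow> ran (pcomp q G ** I) \<subseteq> ran B \<Longrightarrow> ran A \<subseteq> ran I \<Longrightarrow>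
    cert q A (While G q S) B"

lemma is_proj_idW: "is_proj q (idW q :: 'v::finite mat)"
  unfolding is_proj_def using on_reg_idW idW_left[OF on_reg_idW] by auto

lemma is_proj_mzero: "is_proj q (mzero :: 'v::finite mat)"
  unfolding is_proj_def by simp

lemma cert_proj: "cert q A S B \<Longrightarrow> is_proj q A \<and> is_proj q B"
  by (induction rule: cert.induct) (auto simp: is_proj_idW is_proj_mzero)

lemma models_ext: "is_proj q A \<Longrightarrow> models \<rho> (ext q A) \<longleftrightarrow> ext q A ** \<rho> = \<rho>"
  by (rule models_iff) (use is_proj_ext[of q A] in \<open>simp add: is_proj_def\<close>)

lemma ran_mzero: "ran (mzero::'v::finite mat) = {\<lambda>s. 0}"
  unfolding ran_def mv_def mzero_def by auto

lemma pdo_UNIV: "pdo UNIV \<rho> \<longleftrightarrow> psd \<rho> \<and> Re (mtrace \<rho>) \<le> 1" by (simp add: pdo_def)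

lemma tnp_pdo: "tnp E \<Longrightarrow> pdo UNIV \<rho> \<Longrightarrow> pdo UNIV (E \<rho>)"
  unfolding tnp_def pdo_UNIV by (meson order_trans)

lemma mmult_lin: "(X::'v::finite mat) ** (\<lambda>s t. a * Y s t + b * Z s t) = (\<lambda>s t. a * (X ** Y) s t + b * (X ** Z) s t)"
  unfolding mmult_def by (auto intro!: ext simp: distrib_left sum.distrib sum_distrib_left mult_ac)

lemma ran_ext_mono: assumes A: "on_reg q A" and B: "is_proj q B" and AB: "ran A \<subseteq> ran B"
  shows "ext q B ** ext q A = ext q A"
proof -
  have "B ** A = A" using ran_sub_iff[of B A] B AB by (simp add: is_proj_def)
  then show ?thesis using B by (simp add: ext_mmult[symmetric] is_proj_def)
qed

lemma cert_sound: "cert q A S B \<Longrightarrow> wf S \<Longrightarrow> hoare (ext q A) S (ext q B)"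
proof (induction rule: cert.induct)
  case (ct_top A S)
  have "\<And>X. models X (idW UNIV :: 'a mat)" using models_iff[of "idW UNIV"] by simp
  then show ?case unfolding hoare_def ext_idW by blast
next
  case (ct_bot B S)
  show ?case unfolding hoare_def
  proof (intro allI impI)
    fix \<rho> E assume h: "pdo UNIV \<rho> \<and> E \<in> den S \<and> models \<rho> (ext q mzero)"
    then have "\<rho> = mzero" using models_ext[OF is_proj_mzero, of \<rho> q] by simp
    then have "E \<rho> = mzero" using den_mzero h by blast
    then show "models (E \<rho>) (ext q B)" using models_ext[OF ct_bot(1)] by simp
  qed
next
  case (ct_spec A B X Y)
  show ?case unfolding hoare_def
  proof (intro allI impI)
    fix \<rho> E assume h: "pdo UNIV \<rho> \<and> E \<in> den (Spec X Y q) \<and> models \<rho> (ext q A)"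
    then obtain As where E: "E = kraus (map (ext q) As)" and As: "As \<in> spec_kraus q X Y" by auto
    have "ext q B ** E \<rho> = E \<rho>" unfolding E
      by (rule spec_sound[OF As ct_spec(1,2,3,4)]) (use h models_ext[OF ct_spec(1)] in \<open>auto simp: pdo_UNIV\<close>)
    then show "models (E \<rho>) (ext q B)" using models_ext[OF ct_spec(2)] by simp
  qed
next
  case (ct_atom A B S)
  then show ?case by simp
next
  case (ct_seq A S0 R S1 B)
  show ?case unfolding hoare_def
  proof (intro allI impI)
    fix \<rho> E assume h: "pdo UNIV \<rho> \<and> E \<in> den (Seq S0 S1) \<and> models \<rho> (ext q A)"
    then obtain E0 E1 where E: "E = E1 \<circ> E0" and e: "E0 \<in> den S0" "E1 \<in> den S1" by auto
    have w: "wf S0" "wf S1" using ct_seq by auto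
    have "models (E0 \<rho>) (ext q R)" using ct_seq.IH(1)[OF w(1)] h e unfolding hoare_def by blast
    moreover have "pdo UNIV (E0 \<rho>)" using tnp_pdo[OF den_tnp[OF w(1) e(1)]] h by blast
    ultimately show "models (E \<rho>) (ext q B)" using ct_seq.IH(2)[OF w(2)] e unfolding hoare_def E by auto
  qed
next
  case (ct_pch A S0 B S1 p)
  have B: "is_proj q B" using cert_proj[OF ct_pch.hyps(1)] by simp
  show ?case unfolding hoare_def
  proof (intro allI impI)
    fix \<rho> E assume h: "pdo UNIV \<rho> \<and> E \<in> den (PChoice S0 p S1) \<and> models \<rho> (ext q A)"
    then obtain E0 E1 where E: "E = (\<lambda>\<rho>. (\<lambda>s t. complex_of_real p * E0 \<rho> s t
        + complex_of_real (1 - p) * E1 \<rho> s t))" and e: "E0 \<in> den S0" "E1 \<in> den S1" by auto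
    have w: "wf S0" "wf S1" using ct_pch by auto
    have "models (E0 \<rho>) (ext q B)" "models (E1 \<rho>) (ext q B)"
      using ct_pch.IH(1)[OF w(1)] ct_pch.IH(2)[OF w(2)] h e unfolding hoare_def by blast+
    then have "ext q B ** E0 \<rho> = E0 \<rho>" "ext q B ** E1 \<rho> = E1 \<rho>" using models_ext[OF B] by auto
    then have "ext q B ** E \<rho> = E \<rho>" unfolding E mmult_lin by simp
    then show "models (E \<rho>) (ext q B)" using models_ext[OF B] by simp
  qed
next
  case (ct_if A1 S1 B A0 S0 A G)
  have B: "is_proj q B" using cert_proj[OF ct_if.hyps(1)] by simp
  have A1: "is_proj q A1" using cert_proj[OF ct_if.hyps(1)] by simp
  have A0: "is_proj q A0" using cert_proj[OF ct_if.hyps(2)] by simp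
  have G: "is_proj q G" by fact
  have Gc: "is_proj q (pcomp q G)" by (rule is_proj_pcomp[OF G])
  have w: "wf S1" "wf S0" using ct_if by auto
  show ?case unfolding hoare_def
  proof (intro allI impI)
    fix \<rho> E assume h: "pdo UNIV \<rho> \<and> E \<in> den (If G q S1 S0) \<and> models \<rho> (ext q A)"
    then obtain E1 E0 where E: "E = (\<lambda>\<rho>. madd (E1 (ext q G ** \<rho> ** ext q G))
        (E0 (ext q (pcomp q G) ** \<rho> ** ext q (pcomp q G))))" and e: "E1 \<in> den S1" "E0 \<in> den S0" by auto
    have rA: "ext q A ** \<rho> = \<rho>" using h models_ext[OF ct_if.hyps(3)] by simp
    have branch: "pdo UNIV (ext q H ** \<rho> ** ext q H) \<and> models (ext q H ** \<rho> ** ext q H) (ext q A')"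
      if H: "is_proj q H" and A': "is_proj q A'" and HA: "ran (H ** A) \<subseteq> ran A'" for H A'
    proof -
      have Hp: "is_proj UNIV (ext q H)" by (rule is_proj_ext[OF H])
      have "pdo UNIV (ext q H ** \<rho> ** ext q H)" using tnp_pdo[OF tnp_proj[OF Hp]] h by blast
      moreover have "ext q A' ** ext q (H ** A) = ext q (H ** A)"
        by (rule ran_ext_mono[OF on_reg_mmult[OF is_projD(1)[OF H] is_projD(1)[OF ct_if.hyps(3)]] A' HA])
      then have "ext q A' ** (ext q H ** \<rho> ** ext q H) = ext q H ** \<rho> ** ext q H"
        using rA is_projD(1)[OF H] by (metis ext_mmult mmult_assoc)
      ultimately show ?thesis using models_ext[OF A'] by simp
    qed
    have b1: "models (E1 (ext q G ** \<rho> ** ext q G)) (ext q B)"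
      using ct_if.IH(1)[OF w(1)] branch[OF G A1 ct_if.hyps(5)] e unfolding hoare_def by blast
    have b0: "models (E0 (ext q (pcomp q G) ** \<rho> ** ext q (pcomp q G))) (ext q B)"
      using ct_if.IH(2)[OF w(2)] branch[OF Gc A0 ct_if.hyps(6)] e unfolding hoare_def by blast
    have "ext q B ** E \<rho> = E \<rho>" using b1 b0 models_ext[OF B] unfolding E by (simp add: mmult_madd_right)
    then show "models (E \<rho>) (ext q B)" using models_ext[OF B] by simp
  qed
next
  case (ct_while A1 S I A B G)
  have A1: "is_proj q A1" using cert_proj[OF ct_while.hyps(1)] by simp
  have G: "is_proj q G" and I: "is_proj q I" and B: "is_proj q B" and A: "is_proj q A" by fact+
  have Gc: "is_proj q (pcomp q G)" by (rule is_proj_pcomp[OF G])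
  have w: "wf S" using ct_while by auto
  have GU: "is_proj UNIV (ext q G)" by (rule is_proj_ext[OF G])
  show ?case unfolding hoare_def
  proof (intro allI impI)
    fix \<rho> E assume h: "pdo UNIV \<rho> \<and> E \<in> den (While G q S) \<and> models \<rho> (ext q A)"
    then obtain Fs where E: "E = (\<lambda>\<rho>. (\<lambda>s t. \<Sum>k. (ext q (pcomp q G) ** loop_iter (ext q G) Fs k \<rho>
        ** ext q (pcomp q G)) s t))" and Fs: "\<And>k. Fs k \<in> den S" by auto
    have t: "\<And>k. tnp (Fs k)" using den_tnp[OF w Fs] .
    have r: "psd \<rho>" "Re (mtrace \<rho>) \<le> 1" using h by (auto simp: pdo_UNIV)
    note wc = while_core[where Fs=Fs, OF GU t r(1)]
    let ?it = "\<lambda>k. loop_iter (ext q G) Fs k \<rho>"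
    have rA: "ext q A ** \<rho> = \<rho>" using h models_ext[OF A] by simp
    have AI: "ext q I ** ext q A = ext q A" by (rule ran_ext_mono[OF is_projD(1)[OF A] I ct_while.hyps(8)])
    have proj_step: "ext q A' ** (ext q H ** X ** ext q H) = ext q H ** X ** ext q H"
      if H: "is_proj q H" and A': "is_proj q A'" and HA: "ran (H ** I) \<subseteq> ran A'" and X: "ext q I ** X = X" for H A' X
    proof -
      have "ext q A' ** ext q (H ** I) = ext q (H ** I)"
        by (rule ran_ext_mono[OF on_reg_mmult[OF is_projD(1)[OF H] is_projD(1)[OF I]] A' HA])
      then show ?thesis using X is_projD(1)[OF H] by (metis ext_mmult mmult_assoc)
    qed
    have itk: "psd (?it k) \<and> Re (mtrace (?it k)) \<le> Re (mtrace \<rho>)" for k using wc(1) by blast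
    have inv: "ext q I ** ?it k = ?it k" for k
    proof (induction k)
      case 0 then show ?case using rA AI by (metis loop_iter.simps(1) mmult_assoc)
    next
      case (Suc k)
      have p1: "pdo UNIV (ext q G ** ?it k ** ext q G)"
        using tnp_pdo[OF tnp_proj[OF GU]] itk[of k] r(2) by (auto simp: pdo_UNIV)
      have m1: "models (ext q G ** ?it k ** ext q G) (ext q A1)"
        using proj_step[OF G A1 ct_while.hyps(6) Suc] models_ext[OF A1] by simp
      have "models (Fs k (ext q G ** ?it k ** ext q G)) (ext q I)"
        using ct_while.IH[OF w] p1 m1 Fs unfolding hoare_def by blast
      then show ?case using models_ext[OF I] by simp
    qed
    have terms: "ext q B ** (ext q (pcomp q G) ** ?it k ** ext q (pcomp q G)) = ext q (pcomp q G) ** ?it k ** ext q (pcomp q G)" for k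
      by (rule proj_step[OF Gc B ct_while.hyps(7) inv])
    have sm: "\<And>s t. summable (\<lambda>k. (ext q (pcomp q G) ** ?it k ** ext q (pcomp q G)) s t)"
      using wc(2) unfolding ext_pcomp .
    have "ext q B ** E \<rho> = E \<rho>" unfolding E using mmult_suminf[OF sm, of "ext q B"] terms by simp
    then show "models (E \<rho>) (ext q B)" using models_ext[OF B] by simp
  qed
qed

lemma cert_triv: "cert q A S B \<Longrightarrow> B = idW q \<or> A = mzero \<Longrightarrow> cert q A T B"
  using cert_proj[of q A S B] ct_top ct_bot by metis

lemma inv_spec: "cert q A (Spec X Y r) B \<Longrightarrow>
   B = idW q \<or> A = mzero \<or> (r = q \<and> ran A \<subseteq> ran X \<and> ran Y \<subseteq> ran B)"
  by (erule cert.cases) auto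

lemma inv_seq: "cert q A (Seq S0 S1) B \<Longrightarrow>
   B = idW q \<or> A = mzero \<or> (\<exists>R. cert q A S0 R \<and> cert q R S1 B)"
  by (erule cert.cases) auto

lemma inv_pch: "cert q A (PChoice S0 p S1) B \<Longrightarrow>
   B = idW q \<or> A = mzero \<or> (cert q A S0 B \<and> cert q A S1 B)"
  by (erule cert.cases) auto

lemma inv_if: "cert q A (If G r S1 S0) B \<Longrightarrow>
   B = idW q \<or> A = mzero \<or> (r = q \<and> (\<exists>A1 A0. cert q A1 S1 B \<and> cert q A0 S0 B \<and> is_proj q G \<and>
     ran (G ** A) \<subseteq> ran A1 \<and> ran (pcomp q G ** A) \<subseteq> ran A0))"
  by (erule cert.cases) auto

lemma inv_while: "cert q A (While G r S) B \<Longrightarrow>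
   B = idW q \<or> A = mzero \<or> (r = q \<and> (\<exists>A1 I. cert q A1 S I \<and> is_proj q I \<and> is_proj q G \<and>
     ran (G ** I) \<subseteq> ran A1 \<and> ran (pcomp q G ** I) \<subseteq> ran B \<and> ran A \<subseteq> ran I))"
  by (erule cert.cases) auto

lemma proj_ran_zero: assumes A: "is_proj q (A::'v::finite mat)" and z: "ran A \<subseteq> ran mzero" shows "A = mzero"
proof (rule ext, rule ext)
  fix s t
  have "mv A (evec t) \<in> ran A" unfolding ran_def by auto
  then have "mv A (evec t) = (\<lambda>s. 0)" using z ran_mzero by auto
  then have "(\<lambda>s. A s t) = (\<lambda>s. 0)" by (simp add: mv_evec)
  then show "A s t = mzero s t" using fun_cong[of "\<lambda>s. A s t" "\<lambda>s. 0" s] by (simp add: mzero_def)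
qed

lemma proj_ran_top: assumes B: "is_proj q (B::'v::finite mat)" and z: "ran (idW q) \<subseteq> ran B" shows "B = idW q"
proof -
  have "B = idW q ** B" using idW_left[OF is_projD(1)[OF B]] by simp
  then have "ran B \<subseteq> ran (idW q)" using ran_mmult_sub by metis
  then show ?thesis using proj_unique[OF B is_proj_idW] z by blast
qed

lemma ran_sub_trans: "ran (A::'v::finite mat) \<subseteq> ran B \<Longrightarrow> ran B \<subseteq> ran C \<Longrightarrow> ran A \<subseteq> ran C" by blast

lemma ran_zero_in: "(\<lambda>s. 0) \<in> ran (A::'v::finite mat)"
  unfolding ran_def by (rule image_eqI[where x="\<lambda>s. 0"]) (simp_all add: mv_zero)

lemma hoare_abort: "hoare A Abort B"
  unfolding hoare_def models_def using ran_zero_in by (auto simp: ran_mzero)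

lemma hoare_skip: assumes "is_proj q A" "is_proj q B" "ran A \<subseteq> ran B" shows "hoare (ext q A) Skip (ext q B)"
proof -
  have "ext q B ** ext q A = ext q A" by (rule ran_ext_mono[OF is_projD(1)[OF assms(1)] assms(2,3)])
  then show ?thesis unfolding hoare_def using models_ext[OF assms(1)] models_ext[OF assms(2)]
    by (metis id_apply mmult_assoc singletonD den.simps(1))
qed

lemma conj_step: assumes A: "is_proj q A" and B: "is_proj q B" and K: "on_reg q K"
  and KA: "ran (K ** A) \<subseteq> ran B" and r: "ext q A ** \<rho> = \<rho>"
  shows "ext q B ** (ext q K ** \<rho> ** M) = ext q K ** \<rho> ** (M::'v::finite mat)"
proof -
  have "ext q B ** ext q (K ** A) = ext q (K ** A)"
    by (rule ran_ext_mono[OF on_reg_mmult[OF K is_projD(1)[OF A]] B KA])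
  then have "ext q B ** ext q K ** ext q A = ext q K ** ext q A"
    using K by (simp add: ext_mmult mmult_assoc)
  then show ?thesis using r by (metis mmult_assoc)
qed

lemma hoare_apply: assumes A: "is_proj q A" and B: "is_proj q B" and U: "on_reg q U"
  and KA: "ran (U ** A) \<subseteq> ran B"
  shows "hoare (ext q A) (Apply q U) (ext q B)"
  unfolding hoare_def using conj_step[OF A B U KA] models_ext[OF A] models_ext[OF B] by auto

lemma hoare_assert: assumes A: "is_proj q A" and B: "is_proj q B" and P: "is_proj q P"
  and KA: "ran (P ** A) \<subseteq> ran B"
  shows "hoare (ext q A) (Assert P q) (ext q B)"
  unfolding hoare_def using conj_step[OF A B is_projD(1)[OF P] KA] models_ext[OF A] models_ext[OF B] by auto

lemma ran_mmult_sub_iff: "ran ((K::'v::finite mat) ** A) \<subseteq> S \<longleftrightarrow> (\<forall>y\<in>ran A. mv K y \<in> S)"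
  unfolding ran_mmult by auto

lemma mmult_sum_right: "(X::'v::finite mat) ** (\<lambda>s t. \<Sum>i\<in>I. F i s t) = (\<lambda>s t. \<Sum>i\<in>I. (X ** F i) s t)"
  unfolding mmult_def by (simp add: sum_distrib_left) (rule ext, rule ext, rule sum.swap)

lemma col0: assumes B: "is_proj q (B::'v::finite mat)" and e: "evec zero_st \<in> ran B"
  shows "B ** ketbra zero_st i = ketbra zero_st i"
proof -
  have "mv B (evec zero_st) = evec zero_st" by (rule proj_fix[OF B e])
  then have c: "\<And>s. B s zero_st = evec zero_st s" by (metis mv_evec)
  show ?thesis
  proof (rule ext, rule ext)
    fix s t
    have "(\<Sum>u\<in>UNIV. B s u * ketbra zero_st i u t) = (\<Sum>u\<in>UNIV. if u = (zero_st::'v st) then B s zero_st * ketbra zero_st i zero_st t else 0)"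
      by (rule sum.cong) (auto simp: ketbra_def)
    then show "(B ** ketbra zero_st i) s t = ketbra zero_st i s t"
      unfolding mmult_def by (simp add: c evec_def ketbra_def)
  qed
qed

lemma hoare_init: assumes B: "is_proj q (B::'v::finite mat)" and e: "evec zero_st \<in> ran B"
  shows "hoare A' (Init q) (ext q B)"
  unfolding hoare_def
proof (intro allI impI)
  fix \<rho> E assume h: "pdo UNIV \<rho> \<and> E \<in> den (Init q) \<and> models \<rho> A'"
  then have E: "E = (\<lambda>\<rho>. (\<lambda>s t. \<Sum>i\<in>{i. supp_in q i}.
        (ext q (ketbra zero_st i) ** \<rho> ** madj (ext q (ketbra zero_st i))) s t))" by simp
  have "\<And>i. ext q B ** ext q (ketbra zero_st i) = ext q (ketbra zero_st i)"
    using col0[OF B e] is_projD(1)[OF B] by (simp add: ext_mmult[symmetric])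
  then have "ext q B ** E \<rho> = E \<rho>" unfolding E mmult_sum_right by (simp add: mmult_assoc[symmetric])
  then show "models (E \<rho>) (ext q B)" using models_ext[OF B] by simp
qed

lemma proj00: assumes Q: "is_proj q (Q::'v::finite mat)" and one: "Q zero_st zero_st = 1"
  shows "evec zero_st \<in> ran Q"
proof -
  let ?f = "\<lambda>u. (cmod (Q u zero_st))^2"
  have d: "Q zero_st zero_st = of_real (\<Sum>u\<in>UNIV. ?f u)" by (rule diag_proj(1)[OF Q])
  then have S1: "(\<Sum>u\<in>UNIV. ?f u) = 1" using one by (metis of_real_eq_1_iff)
  have f0: "?f zero_st = 1" using one by simp
  have "(\<Sum>u\<in>UNIV. ?f u) = ?f zero_st + (\<Sum>u\<in>UNIV - {zero_st}. ?f u)"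
    by (rule sum.remove) auto
  then have "(\<Sum>u\<in>UNIV - {zero_st}. ?f u) = 0" using S1 f0 by simp
  then have "\<forall>u\<in>UNIV - {zero_st}. ?f u = 0" by (subst (asm) sum_nonneg_eq_0_iff) auto
  then have z: "\<And>u. u \<noteq> zero_st \<Longrightarrow> Q u zero_st = 0" by auto
  have "mv Q (evec zero_st) = evec zero_st"
    unfolding mv_evec using z one by (auto simp: evec_def intro!: ext)
  then show ?thesis unfolding ran_def by (metis rangeI)
qed

lemma supp_in_empty: "supp_in {} s \<longleftrightarrow> s = zero_st"
  unfolding supp_in_def zero_st_def by auto

lemma subsp_zero_set: "subsp W {\<lambda>s::'v st. 0 :: complex}"
  unfolding subsp_def by auto

lemma proj_onto_zero: "proj_onto W {\<lambda>s::'v::finite st. 0 :: complex} = mzero"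
proof -
  note p = proj_onto[OF subsp_zero_set[of W]]
  show ?thesis by (rule proj_ran_zero[OF p(1)]) (simp add: p(2) ran_mzero)
qed

lemma w_init_pre:
  assumes Q: "is_proj q (Q::'v::finite mat)" and n: "Q zero_st zero_st \<noteq> 1"
  shows "ext_within q (q - q) (eig1 (q - q) (bra0 q Q)) = mzero"
proof -
  let ?M = "bra0 q Q"
  have S0: "{x. x \<in> ran (idW {}) \<and> mv ?M x = x} = {\<lambda>s. 0}"
  proof
    show "{\<lambda>s. 0} \<subseteq> {x. x \<in> ran (idW {}) \<and> mv ?M x = x}"
      using ran_zero_in mv_zero by auto
    show "{x. x \<in> ran (idW {}) \<and> mv ?M x = x} \<subseteq> {\<lambda>s. 0}"
    proof
      fix x assume "x \<in> {x. x \<in> ran (idW {}) \<and> mv ?M x = x}"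
      then have x: "x \<in> ran (idW {})" "mv ?M x = x" by auto
      have xs: "\<And>s. s \<noteq> zero_st \<Longrightarrow> x s = 0"
        using ran_supp[OF on_reg_idW x(1)] supp_in_empty by blast
      have "mv ?M x zero_st = (\<Sum>t\<in>UNIV. if t = (zero_st::'v st) then ?M zero_st zero_st * x zero_st else 0)"
        unfolding mv_def by (rule sum.cong) (auto simp: xs)
      also have "\<dots> = Q zero_st zero_st * x zero_st" by (simp add: bra0_def zero_st_def)
      finally have "Q zero_st zero_st * x zero_st = x zero_st" using x(2) by simp
      then have x0: "x zero_st = 0" using n by (metis mult_cancel_right2)
      have "x = (\<lambda>s. 0)"
      proof
        fix s show "x s = 0" by (cases "s = zero_st") (use x0 xs in auto)
      qed
      then show "x \<in> {\<lambda>s. 0}" by simp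
    qed
  qed
  show ?thesis unfolding eig1_def by (simp add: S0 proj_onto_zero) (auto simp: ext_within_def mzero_def intro!: ext)
qed

lemma merge_zero: "supp_in q u \<Longrightarrow> merge q u zero_st = u"
  unfolding merge_def supp_in_def zero_st_def by (auto intro!: ext)

lemma ptr_eq: assumes P: "on_reg q (P::'v::finite mat)"
  shows "ptr q P s t = (if s = zero_st \<and> t = zero_st then mtrace P else 0)"
proof (cases "s = zero_st \<and> t = zero_st")
  case True
  have "(\<Sum>u\<in>{u. supp_in q u}. P (merge q u zero_st) (merge q u zero_st)) = (\<Sum>u\<in>{u. supp_in q u}. P u u)"
    by (rule sum.cong) (auto simp: merge_zero)
  also have "\<dots> = (\<Sum>u\<in>UNIV. P u u)"
    by (rule sum_supp_in_UNIV) (use P in \<open>auto simp: on_reg_def\<close>)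
  finally show ?thesis using True by (simp add: ptr_def mtrace_def zero_st_def)
next
  case False
  have "\<And>u. P (merge q u s) (merge q u t) = 0" if h: "\<forall>x\<in>q. \<not> s x \<and> \<not> t x"
  proof -
    fix u
    from False obtain x where "s x \<or> t x" unfolding zero_st_def by (auto simp: fun_eq_iff)
    then have xq: "x \<notin> q" "s x \<or> t x" using h by auto
    then have "\<not> supp_in q (merge q u s) \<or> \<not> supp_in q (merge q u t)"
      unfolding supp_in_def merge_def by auto
    then show "P (merge q u s) (merge q u t) = 0" using P unfolding on_reg_def by blast
  qed
  then show ?thesis using False unfolding ptr_def by auto
qed

lemma trace_pos: assumes P: "is_proj q (P::'v::finite mat)" and n: "P \<noteq> mzero"
  shows "0 < Re (mtrace P)"
proof -
  obtain s t where st: "P s t \<noteq> 0" using n unfolding mzero_def by (auto simp: fun_eq_iff)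
  have "0 < (cmod (P s t))^2" using st by simp
  also have "\<dots> \<le> (\<Sum>u\<in>UNIV. (cmod (P u t))^2)" by (rule member_le_sum) auto
  also have "\<dots> = Re (P t t)" using diag_proj(1)[OF P, of t] by simp
  also have "\<dots> \<le> (\<Sum>u\<in>UNIV. Re (P u u))" by (rule member_le_sum) (use diag_proj(3)[OF P] in auto)
  finally show ?thesis by (simp add: mtrace_def Re_sum)
qed

lemma s_init_post: assumes P: "is_proj q (P::'v::finite mat)" and n: "P \<noteq> mzero"
  shows "evec zero_st \<in> ran (zt q (supp (q - q) (ptr q P)))"
proof -
  let ?T = "ptr q P"
  have T: "\<And>s t. ?T s t = (if s = zero_st \<and> t = zero_st then mtrace P else 0)" by (rule ptr_eq[OF is_projD(1)[OF P]])
  have tr0: "mtrace P \<noteq> 0" using trace_pos[OF P n] by auto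
  have eT: "evec zero_st \<in> ran ?T"
  proof -
    have "mv ?T (\<lambda>u. (1 / mtrace P) * evec zero_st u) = evec zero_st"
    proof
      fix s
      have "mv ?T (\<lambda>u. (1 / mtrace P) * evec zero_st u) s = (\<Sum>t\<in>UNIV. if t = (zero_st::'v st) then ?T s zero_st * (1 / mtrace P) else 0)"
        unfolding mv_def by (rule sum.cong) (auto simp: evec_def)
      then show "mv ?T (\<lambda>u. (1 / mtrace P) * evec zero_st u) s = evec zero_st s"
        using tr0 by (simp add: T evec_def)
    qed
    then show ?thesis unfolding ran_def by (metis rangeI)
  qed
  have onT: "on_reg {} ?T" unfolding on_reg_def T supp_in_empty by auto
  note C = proj_onto[OF subsp_ran[OF onT]]
  let ?C = "supp {} ?T"
  have Cp: "is_proj {} ?C" using C(1) by (simp add: supp_def)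
  have "evec zero_st \<in> ran ?C" using C(2) eT by (simp add: supp_def)
  then have "mv ?C (evec zero_st) = evec zero_st" by (rule proj_fix[OF Cp])
  then have Cc: "\<And>s. ?C s zero_st = evec zero_st s" by (metis mv_evec)
  have r0: "restr (- q) zero_st = zero_st" unfolding restr_def zero_st_def by simp
  have "mv (zt q ?C) (evec zero_st) = evec zero_st"
  proof
    fix s
    have "(\<forall>x\<in>q. \<not> s x) \<and> restr (- q) s = zero_st \<longleftrightarrow> s = zero_st"
      unfolding restr_def zero_st_def by (auto simp: fun_eq_iff)
    then show "mv (zt q ?C) (evec zero_st) s = evec zero_st s"
      unfolding mv_evec zt_def r0 Cc by (auto simp: evec_def zero_st_def)
  qed
  then show ?thesis unfolding ran_def by simp (metis rangeI)
qed

lemma spec_case: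
  assumes c: "cert q0 A (Spec X Y r) B"
    and k: "r = q0 \<Longrightarrow> is_proj q0 A \<Longrightarrow> is_proj q0 B \<Longrightarrow> ran A \<subseteq> ran X \<Longrightarrow> ran Y \<subseteq> ran B \<Longrightarrow> cert q0 A T B"
  shows "cert q0 A T B"
  using inv_spec[OF c] cert_triv[OF c] cert_proj[OF c] k by blast

lemma R_c_bot: "cert q0 A (Spec mzero Q q) B \<Longrightarrow> cert q0 A S B"
  by (erule spec_case) (metis proj_ran_zero ct_bot)

lemma R_c_top: "cert q0 A (Spec P (idW q) q) B \<Longrightarrow> cert q0 A S B"
  by (erule spec_case) (metis proj_ran_top ct_top)

lemma R_c_abort: "cert q0 A (Spec P Q q) B \<Longrightarrow> cert q0 A Abort B"
  by (erule spec_case) (simp add: ct_atom hoare_abort)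

lemma R_c_skip: "cert q0 A (Spec P P q) B \<Longrightarrow> cert q0 A Skip B"
  by (erule spec_case) (use hoare_skip ct_atom atomic.simps(1) in blast)

lemma R_c_cons: "ple P R \<Longrightarrow> ple T Q \<Longrightarrow> cert q0 A (Spec P Q q) B \<Longrightarrow> cert q0 A (Spec R T q) B"
  unfolding ple_def by (erule spec_case) (simp add: ct_spec subset_trans)

lemma R_c_seq: "is_proj q R \<Longrightarrow> cert q0 A (Spec P Q q) B \<Longrightarrow> cert q0 A (Seq (Spec P R q) (Spec R Q q)) B"
  by (erule spec_case) (metis ct_seq ct_spec order_refl)

lemma R_w_init: assumes Q: "is_proj q Q"
  shows "cert q0 A (Spec (ext_within q (q - q) (eig1 (q - q) (bra0 q Q))) Q q) B \<Longrightarrow> cert q0 A (Init q) B"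
proof (erule spec_case)
  assume h: "q = q0" "is_proj q0 A" "is_proj q0 B"
    "ran A \<subseteq> ran (ext_within q (q - q) (eig1 (q - q) (bra0 q Q)))" "ran Q \<subseteq> ran B"
  show "cert q0 A (Init q) B"
  proof (cases "Q zero_st zero_st = 1")
    case True
    have "evec zero_st \<in> ran B" using proj00[OF Q True] h(5) by blast
    then show ?thesis using hoare_init[OF h(3)] h ct_atom by (metis atomic.simps(3))
  next
    case False
    have "A = mzero" using h(4) w_init_pre[OF Q False] proj_ran_zero[OF h(2)] by simp
    then show ?thesis using ct_bot[OF h(3)] by simp
  qed
qed

lemma R_s_init: assumes P: "is_proj q P"
  shows "cert q0 A (Spec P (zt q (supp (q - q) (ptr q P))) q) B \<Longrightarrow> cert q0 A (Init q) B"
proof (erule spec_case)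
  assume h: "q = q0" "is_proj q0 A" "is_proj q0 B"
    "ran A \<subseteq> ran P" "ran (zt q (supp (q - q) (ptr q P))) \<subseteq> ran B"
  show "cert q0 A (Init q) B"
  proof (cases "P = mzero")
    case False
    have "evec zero_st \<in> ran B" using s_init_post[OF P False] h(5) by blast
    then show ?thesis using hoare_init[OF h(3)] h ct_atom by (metis atomic.simps(3))
  next
    case True
    have "A = mzero" using h(4) True proj_ran_zero[OF h(2)] by simp
    then show ?thesis using ct_bot[OF h(3)] by simp
  qed
qed

lemma R_w_unit: assumes Q: "is_proj q Q" and U: "is_unitary q U"
  shows "cert q0 A (Spec (madj U ** Q ** U) Q q) B \<Longrightarrow> cert q0 A (Apply q U) B"
proof (erule spec_case)
  assume h: "q = q0" "is_proj q0 A" "is_proj q0 B" "ran A \<subseteq> ran (madj U ** Q ** U)" "ran Q \<subseteq> ran B"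
  have Uh: "on_reg q U" "madj U ** U = idW q" "U ** madj U = idW q" using U by (auto simp: is_unitary_def)
  have Qh: "on_reg q Q" "Q ** Q = Q" using Q by (auto simp: is_proj_def)
  let ?X = "madj U ** Q ** U"
  have "?X ** ?X = madj U ** (Q ** (U ** madj U) ** Q) ** U" by (simp add: mmult_assoc)
  also have "\<dots> = ?X" unfolding Uh(3) idW_right[OF Qh(1)] Qh(2) by (simp add: mmult_assoc)
  finally have XX: "?X ** ?X = ?X" .
  have XA: "?X ** A = A" using ran_sub_iff[OF XX] h(4) by blast
  have "U ** A = U ** (?X ** A)" unfolding XA ..
  also have "\<dots> = (U ** madj U) ** Q ** (U ** A)" by (simp add: mmult_assoc)
  also have "\<dots> = Q ** (U ** A)" unfolding Uh(3) idW_left[OF Qh(1)] ..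
  finally have "ran (U ** A) \<subseteq> ran Q" using ran_mmult_sub by metis
  then have "ran (U ** A) \<subseteq> ran B" using h(5) by blast
  then show "cert q0 A (Apply q U) B" using hoare_apply[OF h(2,3)] Uh(1) h(1) ct_atom h(2,3)
    by (metis atomic.simps(4))
qed

lemma R_s_unit: assumes P: "is_proj q P" and U: "is_unitary q U"
  shows "cert q0 A (Spec P (U ** P ** madj U) q) B \<Longrightarrow> cert q0 A (Apply q U) B"
proof (erule spec_case)
  assume h: "q = q0" "is_proj q0 A" "is_proj q0 B" "ran A \<subseteq> ran P" "ran (U ** P ** madj U) \<subseteq> ran B"
  have Uh: "on_reg q U" "madj U ** U = idW q" "U ** madj U = idW q" using U by (auto simp: is_unitary_def)
  have PA: "P ** A = A" using ran_sub_iff[of P A] P h(4) by (simp add: is_proj_def)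
  have Aon: "on_reg q A" using h(1,2) by (simp add: is_proj_def)
  have "U ** A = U ** P ** (madj U ** U) ** A" unfolding Uh(2) by (simp add: mmult_assoc idW_left[OF Aon] PA)
  also have "\<dots> = (U ** P ** madj U) ** (U ** A)" by (simp add: mmult_assoc)
  finally have "ran (U ** A) \<subseteq> ran (U ** P ** madj U)" using ran_mmult_sub by metis
  then have "ran (U ** A) \<subseteq> ran B" using h(5) by blast
  then show "cert q0 A (Apply q U) B" using hoare_apply[OF h(2,3)] Uh(1) h(1) ct_atom h(2,3)
    by (metis atomic.simps(4))
qed

lemma R_w_assert: assumes P: "is_proj q P" and Q: "is_proj q Q"
  shows "cert q0 A (Spec (sasaki_imp q P Q) Q q) B \<Longrightarrow> cert q0 A (Assert P q) B"
proof (erule spec_case)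
  assume h: "q = q0" "is_proj q0 A" "is_proj q0 B" "ran A \<subseteq> ran (sasaki_imp q P Q)" "ran Q \<subseteq> ran B"
  have "ran (P ** A) \<subseteq> ran Q" unfolding ran_mmult_sub_iff using sasaki_imp_ran[OF P Q] h(4) by blast
  then have "ran (P ** A) \<subseteq> ran B" using h(5) by blast
  then show "cert q0 A (Assert P q) B" using hoare_assert[OF h(2,3)] P h(1) ct_atom h(2,3)
    by (metis atomic.simps(5))
qed

lemma R_s_assert: assumes P: "is_proj q P" and Q: "is_proj q Q"
  shows "cert q0 A (Spec P (sasaki_conj q Q P) q) B \<Longrightarrow> cert q0 A (Assert Q q) B"
proof (erule spec_case)
  assume h: "q = q0" "is_proj q0 A" "is_proj q0 B" "ran A \<subseteq> ran P" "ran (sasaki_conj q Q P) \<subseteq> ran B"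
  have "ran (Q ** A) \<subseteq> ran (sasaki_conj q Q P)" unfolding ran_mmult_sub_iff using sasaki_conj_ran[OF Q P] h(4) by blast
  then have "ran (Q ** A) \<subseteq> ran B" using h(5) by blast
  then show "cert q0 A (Assert Q q) B" using hoare_assert[OF h(2,3)] Q h(1) ct_atom h(2,3)
    by (metis atomic.simps(5))
qed

lemma R_w_pch1: assumes P1: "is_proj q P1" and P2: "is_proj q P2"
  shows "cert q0 A (Spec (pmeet q P1 P2) Q q) B \<Longrightarrow> cert q0 A (PChoice (Spec P1 Q q) p (Spec P2 Q q)) B"
proof (erule spec_case)
  assume h: "q = q0" "is_proj q0 A" "is_proj q0 B" "ran A \<subseteq> ran (pmeet q P1 P2)" "ran Q \<subseteq> ran B"
  have "ran A \<subseteq> ran P1" "ran A \<subseteq> ran P2" using h(4) pmeet_props(2)[OF P1 P2] by auto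
  then have "cert q0 A (Spec P1 Q q) B" "cert q0 A (Spec P2 Q q) B" using h by (auto intro!: ct_spec)
  then show "cert q0 A (PChoice (Spec P1 Q q) p (Spec P2 Q q)) B" by (rule ct_pch)
qed

lemma R_w_pch2: assumes P1: "is_proj q P1" and P2: "is_proj q P2"
    and c: "cert q0 A (PChoice (Spec P1 Q q) p (Spec P2 Q q)) B"
  shows "cert q0 A (Spec (pmeet q P1 P2) Q q) B"
proof -
  have cp: "is_proj q0 A" "is_proj q0 B" using cert_proj[OF c] by auto
  consider "B = idW q0 \<or> A = mzero" | "cert q0 A (Spec P1 Q q) B" "cert q0 A (Spec P2 Q q) B"
    using inv_pch[OF c] by blast
  then show ?thesis
  proof cases
    case 1 then show ?thesis using cert_triv[OF c] by blast
  next
    case 2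
    show ?thesis
    proof (rule spec_case[OF 2(1)])
      assume h1: "q = q0" "ran A \<subseteq> ran P1" "ran Q \<subseteq> ran B"
      show ?thesis
      proof (rule spec_case[OF 2(2)])
        assume h2: "ran A \<subseteq> ran P2"
        have "ran A \<subseteq> ran (pmeet q P1 P2)" using h1 h2 pmeet_props(2)[OF P1 P2] by auto
        then show ?thesis using h1 cp by (auto intro!: ct_spec)
      qed
    qed
  qed
qed

lemma R_s_pch1: assumes Q1: "is_proj q Q1" and Q2: "is_proj q Q2"
  shows "cert q0 A (Spec P (pjoin q Q1 Q2) q) B \<Longrightarrow> cert q0 A (PChoice (Spec P Q1 q) p (Spec P Q2 q)) B"
proof (erule spec_case)
  assume h: "q = q0" "is_proj q0 A" "is_proj q0 B" "ran A \<subseteq> ran P" "ran (pjoin q Q1 Q2) \<subseteq> ran B"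
  have "ran Q1 \<subseteq> ran (pjoin q Q1 Q2)"
  proof
    fix y assume "y \<in> ran Q1"
    then have "(\<lambda>s. y s + 0) \<in> ran (pjoin q Q1 Q2)"
      using sum_mem[OF _ ran_zero_in[of Q2]] pjoin_props(2)[OF Q1 Q2] by simp
    then show "y \<in> ran (pjoin q Q1 Q2)" by simp
  qed
  moreover have "ran Q2 \<subseteq> ran (pjoin q Q1 Q2)"
  proof
    fix y assume "y \<in> ran Q2"
    then have "(\<lambda>s. 0 + y s) \<in> ran (pjoin q Q1 Q2)"
      using sum_mem[OF ran_zero_in[of Q1]] pjoin_props(2)[OF Q1 Q2] by simp
    then show "y \<in> ran (pjoin q Q1 Q2)" by simp
  qed
  ultimately have "cert q0 A (Spec P Q1 q) B" "cert q0 A (Spec P Q2 q) B" using h by (auto intro!: ct_spec)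
  then show "cert q0 A (PChoice (Spec P Q1 q) p (Spec P Q2 q)) B" by (rule ct_pch)
qed

lemma R_s_pch2: assumes Q1: "is_proj q Q1" and Q2: "is_proj q Q2"
    and c: "cert q0 A (PChoice (Spec P Q1 q) p (Spec P Q2 q)) B"
  shows "cert q0 A (Spec P (pjoin q Q1 Q2) q) B"
proof -
  have cp: "is_proj q0 A" "is_proj q0 B" using cert_proj[OF c] by auto
  consider "B = idW q0 \<or> A = mzero" | "cert q0 A (Spec P Q1 q) B" "cert q0 A (Spec P Q2 q) B"
    using inv_pch[OF c] by blast
  then show ?thesis
  proof cases
    case 1 then show ?thesis using cert_triv[OF c] by blast
  next
    case 2
    show ?thesis
    proof (rule spec_case[OF 2(1)])
      assume h1: "q = q0" "ran A \<subseteq> ran P" "ran Q1 \<subseteq> ran B"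
      show ?thesis
      proof (rule spec_case[OF 2(2)])
        assume h2: "ran Q2 \<subseteq> ran B"
        have "ran (pjoin q Q1 Q2) \<subseteq> ran B"
        proof
          fix u assume "u \<in> ran (pjoin q Q1 Q2)"
          then have "u \<in> {(\<lambda>s. x s + y s) | x y. x \<in> ran Q1 \<and> y \<in> ran Q2}"
            using pjoin_props(2)[OF Q1 Q2] by simp
          then obtain x y where xy: "u = (\<lambda>s. x s + y s)" "x \<in> ran Q1" "y \<in> ran Q2"
            by (rule sum_memE)
          have "x \<in> ran B" "y \<in> ran B" using xy h1 h2 by auto
          then have "(\<lambda>s. x s + y s) \<in> ran B" by (rule subsp_add[OF subsp_ran[OF is_projD(1)[OF cp(2)]]])
          then show "u \<in> ran B" using xy(1) by simp
        qed
        then show ?thesis using h1 cp by (auto intro!: ct_spec)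
      qed
    qed
  qed
qed

lemma R_w_if1: assumes P: "is_proj q P" and P1: "is_proj q P1" and P0: "is_proj q P0"
  shows "cert q0 A (Spec (pmeet q (sasaki_imp q P P1) (sasaki_imp q (pcomp q P) P0)) Q q) B \<Longrightarrow>
     cert q0 A (If P q (Spec P1 Q q) (Spec P0 Q q)) B"
proof (erule spec_case)
  let ?X = "pmeet q (sasaki_imp q P P1) (sasaki_imp q (pcomp q P) P0)"
  assume h: "q = q0" "is_proj q0 A" "is_proj q0 B" "ran A \<subseteq> ran ?X" "ran Q \<subseteq> ran B"
  have X: "ran ?X = ran (sasaki_imp q P P1) \<inter> ran (sasaki_imp q (pcomp q P) P0)"
    by (rule pmeet_props(2)[OF sasaki_imp_proj[OF P P1] sasaki_imp_proj[OF is_proj_pcomp[OF P] P0]])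
  have s1: "ran (P ** A) \<subseteq> ran P1" unfolding ran_mmult_sub_iff using sasaki_imp_ran[OF P P1] h(4) X by blast
  have s0: "ran (pcomp q P ** A) \<subseteq> ran P0" unfolding ran_mmult_sub_iff
    using sasaki_imp_ran[OF is_proj_pcomp[OF P] P0] h(4) X by blast
  have c1: "cert q0 P1 (Spec P1 Q q) B" using P1 h by (auto intro!: ct_spec)
  have c0: "cert q0 P0 (Spec P0 Q q) B" using P0 h by (auto intro!: ct_spec)
  have "cert q0 A (If P q0 (Spec P1 Q q0) (Spec P0 Q q0)) B"
    by (rule ct_if[OF c1[unfolded h(1)] c0[unfolded h(1)] h(2) P[unfolded h(1)] s1 s0[unfolded h(1)]])
  then show "cert q0 A (If P q (Spec P1 Q q) (Spec P0 Q q)) B" using h(1) by simp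
qed

lemma R_w_if2: assumes P: "is_proj q P" and P1: "is_proj q P1" and P0: "is_proj q P0"
    and c: "cert q0 A (If P q (Spec P1 Q q) (Spec P0 Q q)) B"
  shows "cert q0 A (Spec (pmeet q (sasaki_imp q P P1) (sasaki_imp q (pcomp q P) P0)) Q q) B"
proof -
  let ?X = "pmeet q (sasaki_imp q P P1) (sasaki_imp q (pcomp q P) P0)"
  have cp: "is_proj q0 A" "is_proj q0 B" using cert_proj[OF c] by auto
  have X: "ran ?X = ran (sasaki_imp q P P1) \<inter> ran (sasaki_imp q (pcomp q P) P0)"
    by (rule pmeet_props(2)[OF sasaki_imp_proj[OF P P1] sasaki_imp_proj[OF is_proj_pcomp[OF P] P0]])
  consider "B = idW q0 \<or> A = mzero" | A1 A0 where "q = q0" "cert q0 A1 (Spec P1 Q q) B" "cert q0 A0 (Spec P0 Q q) B"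
      "ran (P ** A) \<subseteq> ran A1" "ran (pcomp q P ** A) \<subseteq> ran A0"
    using inv_if[OF c] by blast
  then show ?thesis
  proof cases
    case 1 then show ?thesis using cert_triv[OF c] by blast
  next
    case 2
    have b1: "B = idW q0 \<or> (A1 = mzero \<and> ran (P ** A) \<subseteq> ran mzero) \<or> (ran (P ** A) \<subseteq> ran P1 \<and> ran Q \<subseteq> ran B)"
      using inv_spec[OF 2(2)] 2(4) by auto
    have b0: "B = idW q0 \<or> (A0 = mzero \<and> ran (pcomp q P ** A) \<subseteq> ran mzero) \<or> (ran (pcomp q P ** A) \<subseteq> ran P0 \<and> ran Q \<subseteq> ran B)"
      using inv_spec[OF 2(3)] 2(5) by auto
    show ?thesis
    proof (cases "B = idW q0")
      case True then show ?thesis using cert_triv[OF c] by blast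
    next
      case False
      have "ran (P ** A) \<subseteq> ran mzero \<or> ran (P ** A) \<subseteq> ran P1" using b1 False by blast
      then have r1: "ran (P ** A) \<subseteq> ran P1" using ran_zero_in[of P1] unfolding ran_mzero by blast
      have "ran (pcomp q P ** A) \<subseteq> ran mzero \<or> ran (pcomp q P ** A) \<subseteq> ran P0" using b0 False by blast
      then have r0: "ran (pcomp q P ** A) \<subseteq> ran P0" using ran_zero_in[of P0] unfolding ran_mzero by blast
      have AX: "ran A \<subseteq> ran ?X"
      proof
        fix y assume y: "y \<in> ran A"
        have ys: "\<forall>s. y s \<noteq> 0 \<longrightarrow> supp_in q s" using ran_supp[OF is_projD(1)[OF cp(1)] y] 2(1) by simp
        have "mv P y \<in> ran P1" using r1 y unfolding ran_mmult_sub_iff by blast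
        then have "y \<in> ran (sasaki_imp q P P1)" by (rule sasaki_imp_ran_rev[OF P P1 ys])
        moreover have "mv (pcomp q P) y \<in> ran P0" using r0 y unfolding ran_mmult_sub_iff by blast
        then have "y \<in> ran (sasaki_imp q (pcomp q P) P0)" by (rule sasaki_imp_ran_rev[OF is_proj_pcomp[OF P] P0 ys])
        ultimately show "y \<in> ran ?X" using X by blast
      qed
      show ?thesis
      proof (cases "ran Q \<subseteq> ran B")
        case True then show ?thesis using AX cp 2(1) by (auto intro!: ct_spec)
      next
        case QB: False
        then have z1: "ran (P ** A) \<subseteq> ran mzero" and z0: "ran (pcomp q P ** A) \<subseteq> ran mzero"
          using b1 b0 False by auto
        have "ran A \<subseteq> ran mzero"
        proof
          fix y assume y: "y \<in> ran A"
          have ys: "\<forall>s. y s \<noteq> 0 \<longrightarrow> supp_in q s" using ran_supp[OF is_projD(1)[OF cp(1)] y] 2(1) by simp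
          have "mv P y = (\<lambda>s. 0)" using z1 y ran_mzero unfolding ran_mmult_sub_iff by blast
          moreover have "mv (pcomp q P) y = (\<lambda>s. 0)" using z0 y ran_mzero unfolding ran_mmult_sub_iff by blast
          ultimately have e: "(\<lambda>s. y s - mv P y s) = (\<lambda>s. 0)" "mv P y = (\<lambda>s. 0)" using mv_pcomp[OF P ys] by auto
          have "y = (\<lambda>s. 0)"
          proof
            fix s show "y s = 0" using fun_cong[OF e(1), of s] fun_cong[OF e(2), of s] by simp
          qed
          then show "y \<in> ran mzero" using ran_zero_in by simp
        qed
        then have "A = mzero" using proj_ran_zero[OF cp(1)] by simp
        then show ?thesis using ct_bot[OF cp(2)] by simp
      qed
    qed
  qed
qed

lemma R_w_while: assumes P: "is_proj q P" and Q: "is_proj q Q" and R: "is_proj q R"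
  shows "cert q0 A (Spec (pmeet q (sasaki_imp q P Q) (sasaki_imp q (pcomp q P) R)) R q) B \<Longrightarrow>
    cert q0 A (While P q (Spec Q (pmeet q (sasaki_imp q P Q) (sasaki_imp q (pcomp q P) R)) q)) B"
proof (erule spec_case)
  let ?X = "pmeet q (sasaki_imp q P Q) (sasaki_imp q (pcomp q P) R)"
  assume h: "q = q0" "is_proj q0 A" "is_proj q0 B" "ran A \<subseteq> ran ?X" "ran R \<subseteq> ran B"
  have Xp: "is_proj q ?X" by (rule pmeet_props(1)[OF sasaki_imp_proj[OF P Q] sasaki_imp_proj[OF is_proj_pcomp[OF P] R]])
  have X: "ran ?X = ran (sasaki_imp q P Q) \<inter> ran (sasaki_imp q (pcomp q P) R)"
    by (rule pmeet_props(2)[OF sasaki_imp_proj[OF P Q] sasaki_imp_proj[OF is_proj_pcomp[OF P] R]])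
  have s1: "ran (P ** ?X) \<subseteq> ran Q" unfolding ran_mmult_sub_iff using sasaki_imp_ran[OF P Q] X by blast
  have s0: "ran (pcomp q P ** ?X) \<subseteq> ran B" unfolding ran_mmult_sub_iff
    using sasaki_imp_ran[OF is_proj_pcomp[OF P] R] X h(5) by blast
  have body: "cert q0 Q (Spec Q ?X q) ?X" using Q Xp h(1) by (auto intro!: ct_spec)
  show "cert q0 A (While P q (Spec Q ?X q)) B"
    using ct_while[OF body] Xp h P s1 s0 by auto
qed

lemma R_s_if: assumes P: "is_proj q P" and R: "is_proj q R"
  shows "cert q0 A (Spec P Q q) B \<Longrightarrow>
     cert q0 A (If R q (Spec (sasaki_conj q R P) Q q) (Spec (sasaki_conj q (pcomp q R) P) Q q)) B"
proof (erule spec_case)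
  assume h: "q = q0" "is_proj q0 A" "is_proj q0 B" "ran A \<subseteq> ran P" "ran Q \<subseteq> ran B"
  have s1: "ran (R ** A) \<subseteq> ran (sasaki_conj q R P)" unfolding ran_mmult_sub_iff
    using sasaki_conj_ran[OF R P] h(4) by blast
  have s0: "ran (pcomp q R ** A) \<subseteq> ran (sasaki_conj q (pcomp q R) P)" unfolding ran_mmult_sub_iff
    using sasaki_conj_ran[OF is_proj_pcomp[OF R] P] h(4) by blast
  have p1: "is_proj q (sasaki_conj q R P)" by (rule sasaki_conj_proj[OF R P])
  have p0: "is_proj q (sasaki_conj q (pcomp q R) P)" by (rule sasaki_conj_proj[OF is_proj_pcomp[OF R] P])
  have c1: "cert q0 (sasaki_conj q R P) (Spec (sasaki_conj q R P) Q q) B" using p1 h by (auto intro!: ct_spec)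
  have c0: "cert q0 (sasaki_conj q (pcomp q R) P) (Spec (sasaki_conj q (pcomp q R) P) Q q) B" using p0 h by (auto intro!: ct_spec)
  have "cert q0 A (If R q0 (Spec (sasaki_conj q0 R P) Q q0) (Spec (sasaki_conj q0 (pcomp q0 R) P) Q q0)) B"
    by (rule ct_if[OF c1[unfolded h(1)] c0[unfolded h(1)] h(2) R[unfolded h(1)] s1[unfolded h(1)] s0[unfolded h(1)]])
  then show "cert q0 A (If R q (Spec (sasaki_conj q R P) Q q) (Spec (sasaki_conj q (pcomp q R) P) Q q)) B"
    using h(1) by simp
qed

lemma R_s_while: assumes P: "is_proj q P" and I: "is_proj q Inv"
  shows "cert q0 A (Spec Inv (sasaki_conj q (pcomp q P) Inv) q) B \<Longrightarrow>
    cert q0 A (While P q (Spec (sasaki_conj q P Inv) Inv q)) B"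
proof (erule spec_case)
  assume h: "q = q0" "is_proj q0 A" "is_proj q0 B" "ran A \<subseteq> ran Inv" "ran (sasaki_conj q (pcomp q P) Inv) \<subseteq> ran B"
  have s1: "ran (P ** Inv) \<subseteq> ran (sasaki_conj q P Inv)" unfolding ran_mmult_sub_iff
    using sasaki_conj_ran[OF P I] by blast
  have s0: "ran (pcomp q P ** Inv) \<subseteq> ran B" unfolding ran_mmult_sub_iff
    using sasaki_conj_ran[OF is_proj_pcomp[OF P] I] h(5) by blast
  have p1: "is_proj q (sasaki_conj q P Inv)" by (rule sasaki_conj_proj[OF P I])
  have body: "cert q0 (sasaki_conj q P Inv) (Spec (sasaki_conj q P Inv) Inv q) Inv" using p1 I h(1) by (auto intro!: ct_spec)
  show "cert q0 A (While P q (Spec (sasaki_conj q P Inv) Inv q)) B"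
    using ct_while[OF body] I h P s1 s0 by auto
qed

lemma deriv_cert: "deriv m S T \<Longrightarrow> cert q0 A S B \<Longrightarrow> cert q0 A T B"
proof (induction arbitrary: A B rule: deriv.induct)
  case (refl S) then show ?case by simp
next
  case (trans S0 S1 S2) then show ?case by blast
next
  case (seq_mono S0 T0 S1 T1)
  from inv_seq[OF seq_mono.prems] show ?case
  proof (elim disjE exE conjE)
    assume "B = idW q0" then show ?case using cert_triv[OF seq_mono.prems] by blast
  next
    assume "A = mzero" then show ?case using cert_triv[OF seq_mono.prems] by blast
  next
    fix R assume "cert q0 A S0 R" "cert q0 R S1 B"
    then show ?case using seq_mono.IH ct_seq by blast
  qed
next
  case (pch_mono S0 T0 S1 T1 p)
  from inv_pch[OF pch_mono.prems] show ?case
  proof (elim disjE conjE)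
    assume "B = idW q0" then show ?case using cert_triv[OF pch_mono.prems] by blast
  next
    assume "A = mzero" then show ?case using cert_triv[OF pch_mono.prems] by blast
  next
    assume "cert q0 A S0 B" "cert q0 A S1 B"
    then show ?case using pch_mono.IH ct_pch by blast
  qed
next
  case (if_mono S0 T0 S1 T1 P q)
  from inv_if[OF if_mono.prems] show ?case
  proof (elim disjE exE conjE)
    assume "B = idW q0" then show ?case using cert_triv[OF if_mono.prems] by blast
  next
    assume "A = mzero" then show ?case using cert_triv[OF if_mono.prems] by blast
  next
    fix A1 A0 assume h: "q = q0" "cert q0 A1 S1 B" "cert q0 A0 S0 B" "is_proj q0 P"
      "ran (P ** A) \<subseteq> ran A1" "ran (pcomp q0 P ** A) \<subseteq> ran A0"
    have "cert q0 A1 T1 B" "cert q0 A0 T0 B" using h if_mono.IH by auto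
    moreover have "is_proj q0 A" using cert_proj[OF if_mono.prems] by simp
    ultimately show ?case using ct_if h by blast
  qed
next
  case (while_mono S T P q)
  from inv_while[OF while_mono.prems] show ?case
  proof (elim disjE exE conjE)
    assume "B = idW q0" then show ?case using cert_triv[OF while_mono.prems] by blast
  next
    assume "A = mzero" then show ?case using cert_triv[OF while_mono.prems] by blast
  next
    fix A1 I assume h: "q = q0" "cert q0 A1 S I" "is_proj q0 I" "is_proj q0 P"
      "ran (P ** I) \<subseteq> ran A1" "ran (pcomp q0 P ** I) \<subseteq> ran B" "ran A \<subseteq> ran I"
    have "cert q0 A1 T I" using h while_mono.IH by auto
    moreover have "is_proj q0 A" "is_proj q0 B" using cert_proj[OF while_mono.prems] by auto
    ultimately show ?case using ct_while h by blast
  qed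
next
  case c_bot then show ?case using R_c_bot by blast
next
  case c_top then show ?case using R_c_top by blast
next
  case c_abort then show ?case using R_c_abort by blast
next
  case c_skip then show ?case using R_c_skip by blast
next
  case c_cons then show ?case using R_c_cons by blast
next
  case c_seq then show ?case using R_c_seq by blast
next
  case w_init then show ?case using R_w_init by blast
next
  case w_unit then show ?case using R_w_unit by blast
next
  case w_assert then show ?case using R_w_assert by blast
next
  case w_pch1 then show ?case using R_w_pch1 by blast
next
  case w_pch2 then show ?case using R_w_pch2 by blast
next
  case w_if1 then show ?case using R_w_if1 by blast
next
  case w_if2 then show ?case using R_w_if2 by blast
next
  case w_while then show ?case using R_w_while by blast
next
  case s_init then show ?case using R_s_init by blast
next
  case s_unit then show ?case using R_s_unit by blast
next
  case s_assert then show ?case using R_s_assert by blast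
next
  case s_pch1 then show ?case using R_s_pch1 by blast
next
  case s_pch2 then show ?case using R_s_pch2 by blast
next
  case s_if then show ?case using R_s_if by blast
next
  case s_while then show ?case using R_s_while by blast
qed

theorem theorem4p4:
  fixes q :: "'v::finite set" and P Q :: "'v mat" and S :: "'v prog"
  assumes "is_proj q P" and "is_proj q Q" and "wf S"
    and "deriv Wpc (Spec P Q q) S \<or> deriv Spc (Spec P Q q) S"
  shows "hoare (ext q P) S (ext q Q)"
proof -
  have c0: "cert q P (Spec P Q q) Q" by (rule ct_spec[OF assms(1,2)]) auto
  have "cert q P S Q" using assms(4) deriv_cert[OF _ c0] by blast
  then show ?thesis using cert_sound assms(3) by blast
qed

end
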